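(* Let $R$ be a finite commutative chain ring with maximal ideal $\langle a\rangle$, where $a$ has even nilpotency index $t$, and residue field $\mathbb F_q$ of characteristic $p$. Let $e_1,\dots,e_r$ be positive integers not divisible by $p$, $A=R[X_1,\dots,X_r]/\langle X_1^{e_1}-1,\dots,X_r^{e_r}-1\rangle$, and for each $i$ let $H_i$ be the set of $e_i$-th roots of unity in an algebraic closure of $\mathbb F_q$. Then there exists a non-trivial self-dual semisimple abelian code in $A$ if and only if there exists $\mu=(\mu_1,\dots,\mu_r)\in H_1\times\dots\times H_r$ such that $C(\mu)\neq C(\mu^{-1})$, where $\mu^{-1}=(\mu_1^{-1},\dots,\mu_r^{-1})$.
   Context: A semisimple abelian code is an ideal of $A$. Elements of $A$ are identified with coefficient vectors in $R^n$, $n=e_1\cdots e_r$, with respect to the monomial basis $X_1^{i_1}\cdots X_r^{i_r}$, $0\le i_k<e_k$; with $\mathbf x\cdot\mathbf y=\sum_k x_ky_k$, the dual is $\mathcal K^\perp=\{\mathbf x:\mathbf x\cdot\mathbf c=0\ \forall\mathbf c\in\mathcal K\}$ and $\mathcal K$ is self-dual if $\mathcal K=\mathcal K^\perp$. The trivial self-dual code is $\langle a^{t/2}\rangle A$; a non-trivial self-dual code is a self-dual ideal of $A$ different from it. For $\mu\in H_1\times\dots\times H_r$, $C(\mu)=\{(\mu_1^{q^s},\dots,\mu_r^{q^s}):s\in\mathbb N\}$. *)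

theory Defs
  imports "HOL-Computational_Algebra.Polynomial"
begin

definition is_ideal :: "'r::comm_ring_1 set \<Rightarrow> bool" where
  "is_ideal I \<longleftrightarrow> 0 \<in> I \<and> (\<forall>x\<in>I. \<forall>y\<in>I. x + y \<in> I) \<and> (\<forall>x\<in>I. \<forall>r. r * x \<in> I)"

definition principal_ideal :: "'r::comm_ring_1 \<Rightarrow> 'r set" where
  "principal_ideal a = {x * a | x. True}"

definition finite_chain_ring :: "'r::comm_ring_1 itself \<Rightarrow> bool" where
  "finite_chain_ring _ \<longleftrightarrow> finite (UNIV :: 'r set) \<and>
     (\<forall>I J :: 'r set. is_ideal I \<longrightarrow> is_ideal J \<longrightarrow> I \<subseteq> J \<or> J \<subseteq> I)"

definition is_maximal_ideal :: "'r::comm_ring_1 set \<Rightarrow> bool" where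
  "is_maximal_ideal M \<longleftrightarrow> is_ideal M \<and> M \<noteq> UNIV \<and>
     (\<forall>J. is_ideal J \<longrightarrow> M \<subseteq> J \<longrightarrow> J = M \<or> J = UNIV)"

definition nilpotency_index :: "'r::comm_ring_1 \<Rightarrow> nat \<Rightarrow> bool" where
  "nilpotency_index a t \<longleftrightarrow> a ^ t = 0 \<and> (\<forall>k<t. a ^ k \<noteq> 0)"

definition residue_card :: "'r::comm_ring_1 \<Rightarrow> nat" where
  "residue_card a = card ((\<lambda>x. (+) x ` principal_ideal a) ` (UNIV :: 'r set))"

text \<open>Exponent vectors (i_1,...,i_r) with 0 <= i_k < e_k, encoded as functions nat => nat
  which vanish outside {0..<r} (index k here corresponds to X_{k+1}).\<close>
definition exps :: "nat \<Rightarrow> (nat \<Rightarrow> nat) \<Rightarrow> (nat \<Rightarrow> nat) set" where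
  "exps r e = {i. (\<forall>k<r. i k < e k) \<and> (\<forall>k\<ge>r. i k = 0)}"

text \<open>Elements of A: coefficient vectors supported on the monomial basis.\<close>
definition elemsA :: "nat \<Rightarrow> (nat \<Rightarrow> nat) \<Rightarrow> ((nat \<Rightarrow> nat) \<Rightarrow> 'r::comm_ring_1) set" where
  "elemsA r e = {x. \<forall>i. i \<notin> exps r e \<longrightarrow> x i = 0}"

text \<open>Multiplication in A (X_k^{e_k} = 1): convolution modulo the e_k.\<close>
definition mulA :: "nat \<Rightarrow> (nat \<Rightarrow> nat) \<Rightarrow> ((nat \<Rightarrow> nat) \<Rightarrow> 'r::comm_ring_1)
    \<Rightarrow> ((nat \<Rightarrow> nat) \<Rightarrow> 'r) \<Rightarrow> ((nat \<Rightarrow> nat) \<Rightarrow> 'r)" where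
  "mulA r e x y = (\<lambda>m. if m \<in> exps r e then
      (\<Sum>i\<in>exps r e. \<Sum>j\<in>exps r e.
          if (\<forall>k<r. (i k + j k) mod e k = m k) then x i * y j else 0)
    else 0)"

definition idealA :: "nat \<Rightarrow> (nat \<Rightarrow> nat) \<Rightarrow> ((nat \<Rightarrow> nat) \<Rightarrow> 'r::comm_ring_1) set \<Rightarrow> bool" where
  "idealA r e K \<longleftrightarrow> K \<subseteq> elemsA r e \<and> (\<lambda>_. 0) \<in> K \<and>
     (\<forall>x\<in>K. \<forall>y\<in>K. (\<lambda>i. x i + y i) \<in> K) \<and>
     (\<forall>x\<in>K. \<forall>f\<in>elemsA r e. mulA r e f x \<in> K)"

definition dotA :: "nat \<Rightarrow> (nat \<Rightarrow> nat) \<Rightarrow> ((nat \<Rightarrow> nat) \<Rightarrow> 'r::comm_ring_1)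
    \<Rightarrow> ((nat \<Rightarrow> nat) \<Rightarrow> 'r) \<Rightarrow> 'r" where
  "dotA r e x y = (\<Sum>i\<in>exps r e. x i * y i)"

definition dualA :: "nat \<Rightarrow> (nat \<Rightarrow> nat) \<Rightarrow> ((nat \<Rightarrow> nat) \<Rightarrow> 'r::comm_ring_1) set
    \<Rightarrow> ((nat \<Rightarrow> nat) \<Rightarrow> 'r) set" where
  "dualA r e K = {x \<in> elemsA r e. \<forall>c\<in>K. dotA r e x c = 0}"

definition self_dual :: "nat \<Rightarrow> (nat \<Rightarrow> nat) \<Rightarrow> ((nat \<Rightarrow> nat) \<Rightarrow> 'r::comm_ring_1) set \<Rightarrow> bool" where
  "self_dual r e K \<longleftrightarrow> K = dualA r e K"

definition trivial_code :: "nat \<Rightarrow> (nat \<Rightarrow> nat) \<Rightarrow> 'r::comm_ring_1 \<Rightarrow> nat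
    \<Rightarrow> ((nat \<Rightarrow> nat) \<Rightarrow> 'r) set" where
  "trivial_code r e a t = {(\<lambda>i. a ^ (t div 2) * x i) | x. x \<in> elemsA r e}"

text \<open>A semisimple abelian code (p does not divide the e_k) is an ideal of A.\<close>
definition nontrivial_self_dual_code_exists :: "nat \<Rightarrow> (nat \<Rightarrow> nat) \<Rightarrow> 'r::comm_ring_1 \<Rightarrow> nat \<Rightarrow> bool" where
  "nontrivial_self_dual_code_exists r e a t \<longleftrightarrow>
     (\<exists>K. idealA r e K \<and> self_dual r e K \<and> K \<noteq> trivial_code r e a t)"

text \<open>H_1 x ... x H_r, tuples encoded as nat => 'k, equal to 1 outside {0..<r}.\<close>
definition Hprod :: "nat \<Rightarrow> (nat \<Rightarrow> nat) \<Rightarrow> (nat \<Rightarrow> 'k::field) set" where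
  "Hprod r e = {\<mu>. (\<forall>k<r. \<mu> k ^ e k = 1) \<and> (\<forall>k\<ge>r. \<mu> k = 1)}"

definition orbitC :: "nat \<Rightarrow> (nat \<Rightarrow> 'k::field) \<Rightarrow> (nat \<Rightarrow> 'k) set" where
  "orbitC q \<mu> = {(\<lambda>k. \<mu> k ^ (q ^ s)) | s. True}"

definition inv_tuple :: "(nat \<Rightarrow> 'k::field) \<Rightarrow> (nat \<Rightarrow> 'k)" where
  "inv_tuple \<mu> = (\<lambda>k. inverse (\<mu> k))"

text \<open>phi : R -> K is a ring homomorphism with kernel <a> (so its image is the residue field F_q),
  and K is algebraically closed and algebraic over the image: K is an algebraic closure of F_q.\<close>
definition alg_closure_of_residue :: "('r::comm_ring_1 \<Rightarrow> 'k::alg_closed_field) \<Rightarrow> 'r \<Rightarrow> bool" where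
  "alg_closure_of_residue \<phi> a \<longleftrightarrow>
     (\<forall>x y. \<phi> (x + y) = \<phi> x + \<phi> y) \<and> (\<forall>x y. \<phi> (x * y) = \<phi> x * \<phi> y) \<and> \<phi> 1 = 1 \<and>
     {x. \<phi> x = 0} = principal_ideal a \<and>
     (\<forall>z::'k. \<exists>P. P \<noteq> 0 \<and> (\<forall>n. coeff P n \<in> range \<phi>) \<and> poly P z = 0)"

end

theory Submission
  imports Defs "HOL-Library.FuncSet"
begin


section \<open>The group structure on exponent vectors\<close>

definition gadd :: "nat \<Rightarrow> (nat \<Rightarrow> nat) \<Rightarrow> (nat \<Rightarrow> nat) \<Rightarrow> (nat \<Rightarrow> nat) \<Rightarrow> (nat \<Rightarrow> nat)" where
  "gadd r e i j = (\<lambda>k. if k < r then (i k + j k) mod e k else 0)"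
definition gneg :: "nat \<Rightarrow> (nat \<Rightarrow> nat) \<Rightarrow> (nat \<Rightarrow> nat) \<Rightarrow> (nat \<Rightarrow> nat)" where
  "gneg r e i = (\<lambda>k. if k < r then (e k - i k) mod e k else 0)"
definition gsub :: "nat \<Rightarrow> (nat \<Rightarrow> nat) \<Rightarrow> (nat \<Rightarrow> nat) \<Rightarrow> (nat \<Rightarrow> nat) \<Rightarrow> (nat \<Rightarrow> nat)" where
  "gsub r e i j = gadd r e i (gneg r e j)"

lemma exps_iff: "i \<in> exps r e \<longleftrightarrow> (\<forall>k<r. i k < e k) \<and> (\<forall>k\<ge>r. i k = 0)"
  by (simp add: exps_def)

lemma zero_exps: "\<forall>k<r. 0 < e k \<Longrightarrow> (\<lambda>_. 0) \<in> exps r e"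
  by (simp add: exps_def)

lemma gadd_exps: "\<forall>k<r. 0 < e k \<Longrightarrow> gadd r e i j \<in> exps r e"
  by (simp add: exps_def gadd_def)

lemma gneg_exps: "\<forall>k<r. 0 < e k \<Longrightarrow> gneg r e i \<in> exps r e"
  by (simp add: exps_def gneg_def)

lemma gsub_exps: "\<forall>k<r. 0 < e k \<Longrightarrow> gsub r e i j \<in> exps r e"
  by (simp add: gsub_def gadd_exps)

lemma gadd_comm: "gadd r e i j = gadd r e j i"
  by (rule ext) (simp add: gadd_def add.commute)

lemma gadd_assoc: "gadd r e (gadd r e i j) l = gadd r e i (gadd r e j l)"
  by (rule ext) (simp add: gadd_def mod_add_left_eq mod_add_right_eq add.assoc)

lemma gadd_zero: "i \<in> exps r e \<Longrightarrow> gadd r e i (\<lambda>_. 0) = i"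
  by (rule ext) (simp add: gadd_def exps_def)

lemma gadd_neg: "i \<in> exps r e \<Longrightarrow> gadd r e i (gneg r e i) = (\<lambda>_. 0)"
proof (rule ext)
  fix k assume i: "i \<in> exps r e"
  show "gadd r e i (gneg r e i) k = 0"
  proof (cases "k < r")
    case True
    hence "i k < e k" using i by (simp add: exps_def)
    hence "(i k + (e k - i k) mod e k) mod e k = (i k + (e k - i k)) mod e k"
      by (simp add: mod_add_right_eq)
    also have "\<dots> = 0" using \<open>i k < e k\<close> by simp
    finally show ?thesis using True by (simp add: gadd_def gneg_def)
  qed (simp add: gadd_def)
qed

lemma gadd_eq_iff:
  assumes "\<forall>k<r. 0 < e k" "i \<in> exps r e" "j \<in> exps r e" "m \<in> exps r e"
  shows "gadd r e i j = m \<longleftrightarrow> j = gsub r e m i"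
proof
  assume h: "gadd r e i j = m"
  have "gsub r e m i = gadd r e (gadd r e j i) (gneg r e i)"
    unfolding gsub_def h[symmetric] by (simp only: gadd_comm)
  also have "\<dots> = gadd r e j (gadd r e i (gneg r e i))" by (rule gadd_assoc)
  also have "\<dots> = j" by (simp only: gadd_neg gadd_zero assms)
  finally show "j = gsub r e m i" by simp
next
  assume h: "j = gsub r e m i"
  have "gadd r e i j = gadd r e i (gadd r e m (gneg r e i))" by (simp only: h gsub_def)
  also have "\<dots> = gadd r e (gadd r e m i) (gneg r e i)" by (simp only: gadd_assoc[symmetric] gadd_comm[of r e i m])
  also have "\<dots> = gadd r e m (gadd r e i (gneg r e i))" by (rule gadd_assoc)
  also have "\<dots> = m" by (simp only: gadd_neg gadd_zero assms)
  finally show "gadd r e i j = m" .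
qed

lemma gadd_gsub: "\<forall>k<r. 0 < e k \<Longrightarrow> i \<in> exps r e \<Longrightarrow> m \<in> exps r e \<Longrightarrow> gadd r e i (gsub r e m i) = m"
  using gadd_eq_iff[of r e i "gsub r e m i" m] gsub_exps by blast

lemma gsub_gsub: "\<forall>k<r. 0 < e k \<Longrightarrow> i \<in> exps r e \<Longrightarrow> m \<in> exps r e \<Longrightarrow> gsub r e m (gsub r e m i) = i"
proof -
  assume a: "\<forall>k<r. 0 < e k" "i \<in> exps r e" "m \<in> exps r e"
  have "gadd r e (gsub r e m i) i = m" using gadd_gsub[OF a] by (simp add: gadd_comm)
  thus ?thesis using gadd_eq_iff[of r e "gsub r e m i" i m] a gsub_exps by metis
qed

lemma gsub_add_cancel: "\<forall>k<r. 0 < e k \<Longrightarrow> i \<in> exps r e \<Longrightarrow> h \<in> exps r e \<Longrightarrow> gsub r e (gadd r e i h) i = h"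
  using gadd_eq_iff[of r e i h "gadd r e i h"] gadd_exps by metis

lemma gsub_self: "i \<in> exps r e \<Longrightarrow> gsub r e i i = (\<lambda>_. 0)"
  by (simp add: gsub_def gadd_neg)

lemma gsub_zero_iff:
  assumes "\<forall>k<r. 0 < e k" "i \<in> exps r e" "j \<in> exps r e"
  shows "gsub r e i j = (\<lambda>_. 0) \<longleftrightarrow> i = j"
proof
  assume "gsub r e i j = (\<lambda>_. 0)"
  hence "gadd r e j (\<lambda>_. 0) = i" using gadd_eq_iff[of r e j "\<lambda>_. 0" i] assms zero_exps by metis
  thus "i = j" using gadd_zero assms by metis
qed (simp add: gsub_self assms)

lemma sum_reindex_gsub:
  assumes "\<forall>k<r. 0 < e k" "m \<in> exps r e"
  shows "(\<Sum>i\<in>exps r e. f (gsub r e m i)) = (\<Sum>i\<in>exps r e. f i)"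
  by (rule sum.reindex_bij_witness[of _ "gsub r e m" "gsub r e m"])
     (auto simp: assms gsub_gsub gsub_exps)

lemma sum_reindex_gadd:
  assumes "\<forall>k<r. 0 < e k" "h \<in> exps r e"
  shows "(\<Sum>i\<in>exps r e. f (gadd r e i h)) = (\<Sum>i\<in>exps r e. f i)"
proof (rule sum.reindex_bij_witness[of _ "\<lambda>i. gsub r e i h" "\<lambda>i. gadd r e i h"])
  fix i assume i: "i \<in> exps r e"
  show "gsub r e (gadd r e i h) h = i" using gsub_add_cancel[OF assms(1) assms(2) i] by (simp add: gadd_comm)
  show "gadd r e i h \<in> exps r e" using assms gadd_exps by blast
next
  fix i assume i: "i \<in> exps r e"
  show "gadd r e (gsub r e i h) h = i" using gadd_gsub[OF assms(1) assms(2) i] by (simp add: gadd_comm)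
  show "gsub r e i h \<in> exps r e" using assms gsub_exps by blast
qed simp

lemma finite_exps: "finite (exps r e)"
proof -
  let ?M = "Max (insert 0 (e ` {..<r}))"
  have "exps r e \<subseteq> {i. \<forall>x. (x \<in> {..<r} \<longrightarrow> i x \<in> {..<?M}) \<and> (x \<notin> {..<r} \<longrightarrow> i x = 0)}"
  proof (clarsimp simp: exps_def)
    fix i x assume h: "\<forall>k<r. i k < e k" "x < r"
    have "e x \<le> ?M" by (rule Max_ge) (use h in auto)
    thus "i x < ?M" using h by (meson order_less_le_trans)
  qed
  moreover have "finite {i. \<forall>x. (x \<in> {..<r} \<longrightarrow> i x \<in> {..<?M}) \<and> (x \<notin> {..<r} \<longrightarrow> i x = 0)}"
    by (intro finite_set_of_finite_funs) auto
  ultimately show ?thesis by (rule finite_subset)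
qed




section \<open>Convolution\<close>

lemma gadd4: "gadd r e (gadd r e a b) (gadd r e c d) = (\<lambda>k. if k < r then (a k + b k + c k + d k) mod e k else 0)"
  by (rule ext) (simp add: gadd_def mod_add_eq add.assoc)

lemma gneg_unique:
  assumes E: "\<forall>k<r. 0 < e k" and x: "x \<in> exps r e" and y: "y \<in> exps r e" and h: "gadd r e x y = (\<lambda>_. 0)"
  shows "y = gneg r e x"
proof -
  have "y = gsub r e (\<lambda>_. 0) x" using gadd_eq_iff[OF E x y zero_exps[OF E]] h by blast
  also have "\<dots> = gneg r e x" unfolding gsub_def using gadd_zero[OF gneg_exps[OF E]] gadd_comm by metis
  finally show ?thesis .
qed

lemma gneg_gsub:
  assumes E: "\<forall>k<r. 0 < e k" and h: "h \<in> exps r e" and i: "i \<in> exps r e"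
  shows "gneg r e (gsub r e h i) = gsub r e i h"
proof -
  have "gadd r e (gsub r e h i) (gsub r e i h) = gadd r e (gadd r e h (gneg r e h)) (gadd r e i (gneg r e i))"
    unfolding gsub_def gadd4 by (rule ext) (simp add: ac_simps)
  also have "\<dots> = (\<lambda>_. 0)" using gadd_neg[OF h] gadd_neg[OF i] gadd_zero[OF zero_exps[OF E]] by simp
  finally show ?thesis using gneg_unique[OF E gsub_exps[OF E] gsub_exps[OF E]] by metis
qed

lemma gneg_gneg:
  assumes E: "\<forall>k<r. 0 < e k" and i: "i \<in> exps r e"
  shows "gneg r e (gneg r e i) = i"
proof -
  have "gadd r e (gneg r e i) i = (\<lambda>_. 0)" using gadd_neg[OF i] gadd_comm by metis
  thus ?thesis using gneg_unique[OF E gneg_exps[OF E] i] by metis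
qed

lemma gneg_gadd:
  assumes E: "\<forall>k<r. 0 < e k" and h: "h \<in> exps r e" and i: "i \<in> exps r e"
  shows "gneg r e (gadd r e h i) = gadd r e (gneg r e h) (gneg r e i)"
proof -
  have "gadd r e (gadd r e h i) (gadd r e (gneg r e h) (gneg r e i)) = gadd r e (gadd r e h (gneg r e h)) (gadd r e i (gneg r e i))"
    unfolding gadd4 by (rule ext) (simp add: ac_simps)
  also have "\<dots> = (\<lambda>_. 0)" using gadd_neg[OF h] gadd_neg[OF i] gadd_zero[OF zero_exps[OF E]] by simp
  finally show ?thesis using gneg_unique[OF E gadd_exps[OF E] gadd_exps[OF E]] by metis
qed

lemma gsub_gadd_gsub:
  assumes E: "\<forall>k<r. 0 < e k" and m: "m \<in> exps r e" and j: "j \<in> exps r e" and l: "l \<in> exps r e"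
  shows "gsub r e m (gadd r e j l) = gsub r e (gsub r e m j) l"
  unfolding gsub_def gneg_gadd[OF E j l] gadd_assoc ..

definition conv :: "nat \<Rightarrow> (nat \<Rightarrow> nat) \<Rightarrow> ((nat \<Rightarrow> nat) \<Rightarrow> 'a::comm_ring_1) \<Rightarrow> ((nat \<Rightarrow> nat) \<Rightarrow> 'a) \<Rightarrow> ((nat \<Rightarrow> nat) \<Rightarrow> 'a)" where
  "conv r e x y = (\<lambda>m. if m \<in> exps r e then \<Sum>i\<in>exps r e. x i * y (gsub r e m i) else 0)"

definition delta :: "(nat \<Rightarrow> nat) \<Rightarrow> ((nat \<Rightarrow> nat) \<Rightarrow> 'a::comm_ring_1)" where
  "delta h = (\<lambda>i. if i = h then 1 else 0)"

definition star :: "nat \<Rightarrow> (nat \<Rightarrow> nat) \<Rightarrow> ((nat \<Rightarrow> nat) \<Rightarrow> 'a::comm_ring_1) \<Rightarrow> ((nat \<Rightarrow> nat) \<Rightarrow> 'a)" where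
  "star r e x = (\<lambda>g. if g \<in> exps r e then x (gneg r e g) else 0)"

lemma elemsA_iff: "x \<in> elemsA r e \<longleftrightarrow> (\<forall>i. i \<notin> exps r e \<longrightarrow> x i = 0)"
  by (simp add: elemsA_def)

lemma conv_elemsA: "conv r e x y \<in> elemsA r e"
  by (simp add: elemsA_def conv_def)

lemma star_elemsA: "star r e x \<in> elemsA r e"
  by (simp add: elemsA_def star_def)

lemma delta_elemsA: "h \<in> exps r e \<Longrightarrow> delta h \<in> elemsA r e"
  by (simp add: elemsA_def delta_def)

lemma conv_comm:
  assumes E: "\<forall>k<r. 0 < e k"
  shows "conv r e x y = conv r e y x"
proof (rule ext)
  fix m show "conv r e x y m = conv r e y x m"
  proof (cases "m \<in> exps r e")
    case True
    have "(\<Sum>i\<in>exps r e. x i * y (gsub r e m i)) = (\<Sum>i\<in>exps r e. x (gsub r e m i) * y (gsub r e m (gsub r e m i)))"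
      using sum_reindex_gsub[OF E True, of "\<lambda>i. x i * y (gsub r e m i)"] by simp
    also have "\<dots> = (\<Sum>i\<in>exps r e. y i * x (gsub r e m i))"
      by (rule sum.cong) (auto simp: gsub_gsub[OF E _ True] mult.commute)
    finally show ?thesis using True by (simp add: conv_def)
  qed (simp add: conv_def)
qed

lemma conv_assoc:
  assumes E: "\<forall>k<r. 0 < e k"
  shows "conv r e (conv r e x y) z = conv r e x (conv r e y z)"
proof (rule ext)
  fix m show "conv r e (conv r e x y) z m = conv r e x (conv r e y z) m"
  proof (cases "m \<in> exps r e")
    case True
    have "conv r e (conv r e x y) z m = (\<Sum>i\<in>exps r e. (\<Sum>j\<in>exps r e. x j * y (gsub r e i j)) * z (gsub r e m i))"
      using True by (simp add: conv_def)
    also have "\<dots> = (\<Sum>j\<in>exps r e. x j * (\<Sum>i\<in>exps r e. y (gsub r e i j) * z (gsub r e m i)))"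
      unfolding sum_distrib_left sum_distrib_right mult.assoc by (rule sum.swap)
    also have "\<dots> = (\<Sum>j\<in>exps r e. x j * (\<Sum>l\<in>exps r e. y l * z (gsub r e (gsub r e m j) l)))"
    proof (rule sum.cong[OF refl])
      fix j assume j: "j \<in> exps r e"
      have "(\<Sum>i\<in>exps r e. y (gsub r e i j) * z (gsub r e m i)) =
            (\<Sum>l\<in>exps r e. y (gsub r e (gadd r e l j) j) * z (gsub r e m (gadd r e l j)))"
        using sum_reindex_gadd[OF E j, of "\<lambda>i. y (gsub r e i j) * z (gsub r e m i)"] by simp
      also have "\<dots> = (\<Sum>l\<in>exps r e. y l * z (gsub r e (gsub r e m j) l))"
      proof (rule sum.cong[OF refl])
        fix l assume l: "l \<in> exps r e"
        have "gsub r e (gadd r e l j) j = l" using gsub_add_cancel[OF E j l] gadd_comm by metis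
        moreover have "gsub r e m (gadd r e l j) = gsub r e (gsub r e m j) l"
          using gsub_gadd_gsub[OF E True j l] gadd_comm by metis
        ultimately show "y (gsub r e (gadd r e l j) j) * z (gsub r e m (gadd r e l j)) = y l * z (gsub r e (gsub r e m j) l)"
          by simp
      qed
      finally show "x j * (\<Sum>i\<in>exps r e. y (gsub r e i j) * z (gsub r e m i)) = x j * (\<Sum>l\<in>exps r e. y l * z (gsub r e (gsub r e m j) l))"
        by simp
    qed
    also have "\<dots> = conv r e x (conv r e y z) m"
      using True by (simp add: conv_def gsub_exps[OF E])
    finally show ?thesis .
  qed (simp add: conv_def)
qed

lemma conv_delta:
  assumes E: "\<forall>k<r. 0 < e k" and h: "h \<in> exps r e"
  shows "conv r e (delta h) c = (\<lambda>i. if i \<in> exps r e then c (gsub r e i h) else 0)"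
proof (rule ext)
  fix i
  have "(\<Sum>j\<in>exps r e. (if j = h then 1 else 0) * c (gsub r e i j)) = c (gsub r e i h)"
    by (simp add: h finite_exps if_distrib[of "\<lambda>u. u * _"] cong: if_cong)
  thus "conv r e (delta h) c i = (if i \<in> exps r e then c (gsub r e i h) else 0)"
    by (simp add: conv_def delta_def)
qed

lemma gsub_zero: "\<forall>k<r. 0 < e k \<Longrightarrow> i \<in> exps r e \<Longrightarrow> gsub r e i (\<lambda>_. 0) = i"
proof -
  assume E: "\<forall>k<r. 0 < e k" and i: "i \<in> exps r e"
  have "gadd r e (\<lambda>_. 0) i = i" using gadd_zero[OF i] gadd_comm by metis
  thus ?thesis using gadd_eq_iff[OF E zero_exps[OF E] i i] by metis
qed

lemma conv_delta0:
  assumes E: "\<forall>k<r. 0 < e k" and x: "x \<in> elemsA r e"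
  shows "conv r e (delta (\<lambda>_. 0)) x = x"
  using x by (auto simp: conv_delta[OF E zero_exps[OF E]] gsub_zero[OF E] elemsA_iff)

lemma conv_delta0_right:
  assumes E: "\<forall>k<r. 0 < e k" and x: "x \<in> elemsA r e"
  shows "conv r e x (delta (\<lambda>_. 0)) = x"
  using conv_delta0[OF E x] conv_comm[OF E] by metis

lemma conv_add_left: "conv r e (\<lambda>i. x i + y i) z = (\<lambda>i. conv r e x z i + conv r e y z i)"
  by (rule ext) (simp add: conv_def distrib_right sum.distrib)

lemma conv_diff_left: "conv r e (\<lambda>i. x i - y i) z = (\<lambda>i. conv r e x z i - conv r e y z i)"
  by (rule ext) (simp add: conv_def left_diff_distrib sum_subtractf)

lemma conv_smul_left: "conv r e (\<lambda>i. c * x i) z = (\<lambda>i. c * conv r e x z i)"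
  by (rule ext) (simp add: conv_def sum_distrib_left mult.assoc)

lemma conv_zero_left: "conv r e (\<lambda>_. 0) z = (\<lambda>_. 0)"
  by (rule ext) (simp add: conv_def)

lemma conv_add_right: "\<forall>k<r. 0 < e k \<Longrightarrow> conv r e z (\<lambda>i. x i + y i) = (\<lambda>i. conv r e z x i + conv r e z y i)"
  by (simp add: conv_comm[of r e z] conv_add_left)

lemma conv_diff_right: "\<forall>k<r. 0 < e k \<Longrightarrow> conv r e z (\<lambda>i. x i - y i) = (\<lambda>i. conv r e z x i - conv r e z y i)"
  by (simp add: conv_comm[of r e z] conv_diff_left)

lemma conv_smul_right: "\<forall>k<r. 0 < e k \<Longrightarrow> conv r e z (\<lambda>i. c * x i) = (\<lambda>i. c * conv r e z x i)"
  by (simp add: conv_comm[of r e z] conv_smul_left)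

lemma conv_zero_right: "\<forall>k<r. 0 < e k \<Longrightarrow> conv r e z (\<lambda>_. 0) = (\<lambda>_. 0)"
  by (simp add: conv_comm[of r e z] conv_zero_left)

lemma star_star:
  assumes E: "\<forall>k<r. 0 < e k" and x: "x \<in> elemsA r e"
  shows "star r e (star r e x) = x"
  using x by (auto simp: star_def gneg_gneg[OF E] gneg_exps[OF E] elemsA_iff)

lemma star_delta0:
  assumes E: "\<forall>k<r. 0 < e k"
  shows "star r e (delta (\<lambda>_. 0)) = delta (\<lambda>_. 0)"
proof -
  have "gneg r e (\<lambda>_. 0) = (\<lambda>_. 0)" by (auto simp: gneg_def)
  hence "g \<in> exps r e \<Longrightarrow> gneg r e g = (\<lambda>_. 0) \<longleftrightarrow> g = (\<lambda>_. 0)" for g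
    using gneg_gneg[OF E] by metis
  thus ?thesis using zero_exps[OF E] by (auto simp: star_def delta_def)
qed

lemma star_add: "star r e (\<lambda>i. x i + y i) = (\<lambda>i. star r e x i + star r e y i)"
  by (auto simp: star_def)
lemma star_diff: "star r e (\<lambda>i. x i - y i) = (\<lambda>i. star r e x i - star r e y i)"
  by (auto simp: star_def)
lemma star_smul: "star r e (\<lambda>i. c * x i) = (\<lambda>i. c * star r e x i)"
  by (auto simp: star_def)
lemma star_zero: "star r e (\<lambda>_. 0) = (\<lambda>_. 0)"
  by (auto simp: star_def)

lemma star_conv:
  assumes E: "\<forall>k<r. 0 < e k"
  shows "star r e (conv r e x y) = conv r e (star r e x) (star r e y)"
proof (rule ext)
  fix m show "star r e (conv r e x y) m = conv r e (star r e x) (star r e y) m"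
  proof (cases "m \<in> exps r e")
    case True
    have "star r e (conv r e x y) m = (\<Sum>i\<in>exps r e. x i * y (gsub r e (gneg r e m) i))"
      using True by (simp add: star_def conv_def gneg_exps[OF E])
    also have "\<dots> = (\<Sum>i\<in>exps r e. x (gneg r e i) * y (gsub r e (gneg r e m) (gneg r e i)))"
      by (rule sum.reindex_bij_witness[of _ "gneg r e" "gneg r e"]) (auto simp: gneg_gneg[OF E] gneg_exps[OF E])
    also have "\<dots> = (\<Sum>i\<in>exps r e. star r e x i * star r e y (gsub r e m i))"
    proof (rule sum.cong[OF refl])
      fix i assume i: "i \<in> exps r e"
      have "gsub r e (gneg r e m) (gneg r e i) = gneg r e (gsub r e m i)"
        unfolding gsub_def gneg_gadd[OF E True gneg_exps[OF E]] gneg_gneg[OF E i] ..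
      thus "x (gneg r e i) * y (gsub r e (gneg r e m) (gneg r e i)) = star r e x i * star r e y (gsub r e m i)"
        using i by (simp add: star_def gsub_exps[OF E])
    qed
    finally show ?thesis using True by (simp add: conv_def)
  qed (simp add: conv_def star_def)
qed

lemma mulA_conv:
  assumes E: "\<forall>k<r. 0 < e k"
  shows "mulA r e x y = conv r e x y"
proof (rule ext)
  fix m show "mulA r e x y m = conv r e x y m"
  proof (cases "m \<in> exps r e")
    case True
    have cond: "(\<forall>k<r. (i k + j k) mod e k = m k) \<longleftrightarrow> j = gsub r e m i"
      if i: "i \<in> exps r e" and j: "j \<in> exps r e" for i j
    proof -
      have "(\<forall>k<r. (i k + j k) mod e k = m k) \<longleftrightarrow> gadd r e i j = m"
        using True by (auto simp: gadd_def exps_def fun_eq_iff)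
      thus ?thesis using gadd_eq_iff[OF E i j True] by simp
    qed
    have "mulA r e x y m = (\<Sum>i\<in>exps r e. \<Sum>j\<in>exps r e. if j = gsub r e m i then x i * y j else 0)"
      using True by (simp add: mulA_def cond cong: sum.cong)
    also have "\<dots> = (\<Sum>i\<in>exps r e. x i * y (gsub r e m i))"
      by (simp add: gsub_exps[OF E] finite_exps)
    finally show ?thesis using True by (simp add: conv_def)
  qed (simp add: conv_def mulA_def)
qed

lemma dot_conv_delta:
  assumes E: "\<forall>k<r. 0 < e k" and h: "h \<in> exps r e"
  shows "dotA r e x (conv r e (delta h) c) = conv r e x (star r e c) h"
proof -
  have "dotA r e x (conv r e (delta h) c) = (\<Sum>i\<in>exps r e. x i * c (gsub r e i h))"
    by (simp add: dotA_def conv_delta[OF E h])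
  also have "\<dots> = conv r e x (star r e c) h"
    using h by (simp add: conv_def star_def gsub_exps[OF E] gneg_gsub[OF E h])
  finally show ?thesis .
qed

lemma dot_conv0:
  assumes E: "\<forall>k<r. 0 < e k" and c: "c \<in> elemsA r e"
  shows "dotA r e x c = conv r e x (star r e c) (\<lambda>_. 0)"
  using dot_conv_delta[OF E zero_exps[OF E], of x c] conv_delta0[OF E c] by simp




section \<open>Principal ideals and chain ring facts\<close>

lemma pid_iff: "x \<in> principal_ideal b \<longleftrightarrow> (\<exists>y. x = y * b)"
  by (simp add: principal_ideal_def)

lemma pid_zero[simp]: "0 \<in> principal_ideal b"
  unfolding pid_iff by (rule exI[of _ 0]) simp

lemma pid_add: "x \<in> principal_ideal b \<Longrightarrow> y \<in> principal_ideal b \<Longrightarrow> x + y \<in> principal_ideal b"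
  by (auto simp: pid_iff distrib_right intro: exI[of _ "_ + _"])

lemma pid_diff: "x \<in> principal_ideal b \<Longrightarrow> y \<in> principal_ideal b \<Longrightarrow> x - y \<in> principal_ideal b"
  by (auto simp: pid_iff left_diff_distrib intro: exI[of _ "_ - _"])

lemma pid_mult: "x \<in> principal_ideal b \<Longrightarrow> c * x \<in> principal_ideal b"
  by (auto simp: pid_iff mult.assoc intro: exI[of _ "_ * _"])

lemma pid_mult2: "x \<in> principal_ideal b \<Longrightarrow> x * c \<in> principal_ideal b"
  using pid_mult[of x b c] by (simp add: mult.commute)

lemma pid_sum: "(\<And>i. i \<in> A \<Longrightarrow> f i \<in> principal_ideal b) \<Longrightarrow> sum f A \<in> principal_ideal b"
  by (induction A rule: infinite_finite_induct) (auto intro: pid_add)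

lemma pid_self: "b \<in> principal_ideal b"
  by (auto simp: pid_iff intro: exI[of _ 1])

lemma pid_prod: "x \<in> principal_ideal b \<Longrightarrow> y \<in> principal_ideal c \<Longrightarrow> x * y \<in> principal_ideal (b * c)"
proof -
  assume "x \<in> principal_ideal b" "y \<in> principal_ideal c"
  then obtain u v where "x = u * b" "y = v * c" by (auto simp: pid_iff)
  hence "x * y = (u * v) * (b * c)" by (simp add: ac_simps)
  thus ?thesis by (auto simp: pid_iff)
qed

lemma pid_pow_mono: "i \<le> j \<Longrightarrow> x \<in> principal_ideal ((b::'a::comm_ring_1) ^ j) \<Longrightarrow> x \<in> principal_ideal (b ^ i)"
proof -
  assume "i \<le> j" "x \<in> principal_ideal (b ^ j)"
  then obtain y where "x = y * b ^ j" by (auto simp: pid_iff)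
  hence "x = (y * b ^ (j - i)) * b ^ i" using \<open>i \<le> j\<close> by (simp add: mult.assoc power_add[symmetric])
  thus ?thesis by (auto simp: pid_iff)
qed

lemma is_ideal_pid: "is_ideal (principal_ideal b)"
  by (auto simp: is_ideal_def intro: pid_add pid_mult)

lemma step_exists: "P (0::nat) \<Longrightarrow> \<not> P n \<Longrightarrow> \<exists>i<n. P i \<and> \<not> P (Suc i)"
proof (induction n)
  case (Suc n) thus ?case by (cases "P n") (auto intro: less_SucI)
qed simp

locale CR =
  fixes a :: "'r::comm_ring_1" and t :: nat and \<phi> :: "'r \<Rightarrow> 'k::alg_closed_field" and p q :: nat
  assumes chain: "finite_chain_ring TYPE('r)"
    and max: "is_maximal_ideal (principal_ideal a)"
    and nil: "nilpotency_index a t" and teven: "even t"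
    and qdef: "q = residue_card a"
    and pprime: "prime p" and pchar: "of_nat p \<in> principal_ideal a"
    and clos: "alg_closure_of_residue \<phi> a"
begin

lemma finite_R: "finite (UNIV :: 'r set)"
  using chain by (simp add: finite_chain_ring_def)

lemma one_notin: "(1::'r) \<notin> principal_ideal a"
proof
  assume "(1::'r) \<in> principal_ideal a"
  hence "x \<in> principal_ideal a" for x using pid_mult[of 1 a x] by simp
  thus False using max by (auto simp: is_maximal_ideal_def)
qed

lemma one_neq_zero: "(1::'r) \<noteq> 0"
  using one_notin pid_zero by metis

lemma unit_of_notin:
  assumes "v \<notin> principal_ideal a"
  shows "\<exists>w. v * w = 1"
proof -
  have "principal_ideal a \<subseteq> principal_ideal v \<or> principal_ideal v \<subseteq> principal_ideal a"
    using chain is_ideal_pid by (auto simp: finite_chain_ring_def)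
  moreover have "\<not> principal_ideal v \<subseteq> principal_ideal a" using assms pid_self by blast
  ultimately have sub: "principal_ideal a \<subseteq> principal_ideal v" by blast
  hence "principal_ideal v = principal_ideal a \<or> principal_ideal v = UNIV"
    using max is_ideal_pid by (auto simp: is_maximal_ideal_def)
  hence "principal_ideal v = UNIV" using assms pid_self by blast
  hence "1 \<in> principal_ideal v" by simp
  thus ?thesis by (auto simp: pid_iff mult.commute)
qed

lemma at_zero: "a ^ t = 0"
  using nil by (simp add: nilpotency_index_def)

lemma t_pos: "t \<ge> 2"
proof -
  have "t \<noteq> 0"
  proof
    assume "t = 0"
    with nil have "(1::'r) = 0" by (simp add: nilpotency_index_def)
    with one_neq_zero show False ..
  qed
  thus ?thesis using teven by presburger
qed

lemma pid_at: "x \<in> principal_ideal (a ^ t) \<Longrightarrow> x = 0"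
  by (auto simp: pid_iff at_zero)

lemma pid_pow_ge_t: "t \<le> j \<Longrightarrow> x \<in> principal_ideal (a ^ j) \<Longrightarrow> x = 0"
  using pid_pow_mono pid_at by blast

lemma ann:
  assumes "j \<le> t" "a ^ j * y = 0"
  shows "y \<in> principal_ideal (a ^ (t - j))"
proof (rule ccontr)
  assume nin: "y \<notin> principal_ideal (a ^ (t - j))"
  have "y \<in> principal_ideal (a ^ 0)" by (auto simp: pid_iff)
  then obtain i where i: "i < t - j" "y \<in> principal_ideal (a ^ i)" "y \<notin> principal_ideal (a ^ Suc i)"
    using step_exists[of "\<lambda>i. y \<in> principal_ideal (a ^ i)" "t - j"] nin by blast
  then obtain v where v: "y = v * a ^ i" by (auto simp: pid_iff)
  have "v \<notin> principal_ideal a"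
  proof
    assume "v \<in> principal_ideal a"
    then obtain w where "v = w * a" by (auto simp: pid_iff)
    hence "y = w * a ^ Suc i" using v by (simp add: ac_simps)
    thus False using i(3) by (auto simp: pid_iff)
  qed
  then obtain w where w: "v * w = 1" using unit_of_notin by blast
  have "w * (a ^ j * y) = (v * w) * a ^ (i + j)" using v by (simp add: power_add ac_simps)
  hence "a ^ (i + j) = w * (a ^ j * y)" using w by simp
  hence "a ^ (i + j) = 0" using assms by simp
  moreover have "i + j < t" using i assms by linarith
  ultimately show False using nil by (auto simp: nilpotency_index_def)
qed

lemma phi_add: "\<phi> (x + y) = \<phi> x + \<phi> y" using clos by (simp add: alg_closure_of_residue_def)
lemma phi_mult: "\<phi> (x * y) = \<phi> x * \<phi> y" using clos by (simp add: alg_closure_of_residue_def)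
lemma phi_one: "\<phi> 1 = 1" using clos by (simp add: alg_closure_of_residue_def)
lemma phi_ker: "\<phi> x = 0 \<longleftrightarrow> x \<in> principal_ideal a"
  using clos by (auto simp: alg_closure_of_residue_def set_eq_iff)
lemma phi_alg: "\<exists>P. P \<noteq> 0 \<and> (\<forall>n. coeff P n \<in> range \<phi>) \<and> poly P z = 0"
  using clos by (simp add: alg_closure_of_residue_def)

lemma phi_zero: "\<phi> 0 = 0"
  using phi_add[of 0 0] by (metis add.right_neutral add_left_cancel)
lemma phi_neg: "\<phi> (- x) = - \<phi> x"
  using phi_add[of x "-x"] phi_zero by (metis neg_eq_iff_add_eq_0 add.right_inverse)
lemma phi_diff: "\<phi> (x - y) = \<phi> x - \<phi> y"
  using phi_add[of x "-y"] phi_neg by simp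
lemma phi_sum: "\<phi> (sum f A) = (\<Sum>i\<in>A. \<phi> (f i))"
  by (induction A rule: infinite_finite_induct) (auto simp: phi_zero phi_add)
lemma phi_of_nat: "\<phi> (of_nat n) = of_nat n"
  by (induction n) (auto simp: phi_zero phi_add phi_one)
lemma phi_pow: "\<phi> (x ^ n) = \<phi> x ^ n"
  by (induction n) (auto simp: phi_one phi_mult)

lemma char_p: "CHAR('k) = p"
proof -
  have "(of_nat p :: 'k) = 0" using phi_ker pchar phi_of_nat by metis
  hence "CHAR('k) dvd p" by (simp add: of_nat_eq_0_iff_char_dvd)
  thus ?thesis using pprime CHAR_not_1 unfolding prime_nat_iff by auto
qed

lemma prime_char: "prime CHAR('k)"
  using char_p pprime by simp

lemma of_nat_K_nonzero: "\<not> p dvd n \<Longrightarrow> (of_nat n :: 'k) \<noteq> 0"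
  by (simp add: of_nat_eq_0_iff_char_dvd char_p)

definition S :: "'k set" where "S = range \<phi>"

lemma S_add: "x \<in> S \<Longrightarrow> y \<in> S \<Longrightarrow> x + y \<in> S"
  by (auto simp: S_def phi_add[symmetric])
lemma S_mult: "x \<in> S \<Longrightarrow> y \<in> S \<Longrightarrow> x * y \<in> S"
  by (auto simp: S_def phi_mult[symmetric])
lemma S_zero: "0 \<in> S" using phi_zero by (auto simp: S_def intro: range_eqI[of _ _ 0])
lemma S_one: "1 \<in> S" using phi_one by (auto simp: S_def intro: range_eqI[of _ _ 1])
lemma S_of_nat: "of_nat n \<in> S" using phi_of_nat by (auto simp: S_def intro: range_eqI[of _ _ "of_nat n"])
lemma S_inverse: "x \<in> S \<Longrightarrow> inverse x \<in> S"
proof -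
  assume "x \<in> S"
  then obtain y where y: "x = \<phi> y" by (auto simp: S_def)
  show ?thesis
  proof (cases "x = 0")
    case False
    hence "y \<notin> principal_ideal a" using y phi_ker by simp
    then obtain w where "y * w = 1" using unit_of_notin by blast
    hence "x * \<phi> w = 1" using y phi_mult phi_one by metis
    hence "inverse x = \<phi> w" by (metis inverse_unique)
    thus ?thesis by (auto simp: S_def)
  qed (simp add: S_zero)
qed
lemma finite_S: "finite S"
  unfolding S_def using finite_R by simp

lemma card_S: "card S = q"
proof -
  let ?cos = "(\<lambda>x. (+) x ` principal_ideal a) ` (UNIV :: 'r set)"
  have key: "(+) x ` principal_ideal a = (+) y ` principal_ideal a \<longleftrightarrow> \<phi> x = \<phi> y" for x y
  proof
    assume h: "(+) x ` principal_ideal a = (+) y ` principal_ideal a"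
    have "x \<in> (+) y ` principal_ideal a" using h[symmetric] by (force intro: image_eqI[of _ _ 0])
    then obtain z where "z \<in> principal_ideal a" "x = y + z" by auto
    thus "\<phi> x = \<phi> y" using phi_add phi_ker by simp
  next
    assume h: "\<phi> x = \<phi> y"
    have "\<phi> (x - y) = 0" using h phi_diff by simp
    hence d: "x - y \<in> principal_ideal a" using phi_ker by blast
    show "(+) x ` principal_ideal a = (+) y ` principal_ideal a"
    proof (intro equalityI subsetI)
      fix u assume "u \<in> (+) x ` principal_ideal a"
      then obtain z where z: "z \<in> principal_ideal a" "u = x + z" by auto
      hence "u = y + ((x - y) + z)" by simp
      thus "u \<in> (+) y ` principal_ideal a" using pid_add[OF d z(1)] by blast
    next
      fix u assume "u \<in> (+) y ` principal_ideal a"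
      then obtain z where z: "z \<in> principal_ideal a" "u = y + z" by auto
      have "\<phi> (y - x) = 0" using h phi_diff by simp
      hence d': "y - x \<in> principal_ideal a" using phi_ker by blast
      have "u = x + ((y - x) + z)" using z by simp
      thus "u \<in> (+) x ` principal_ideal a" using pid_add[OF d' z(1)] by blast
    qed
  qed
  have "bij_betw (\<lambda>C. \<phi> (SOME x. C = (+) x ` principal_ideal a)) ?cos S"
  proof (rule bij_betw_imageI)
    show "inj_on (\<lambda>C. \<phi> (SOME x. C = (+) x ` principal_ideal a)) ?cos"
    proof (rule inj_onI)
      fix C D assume C: "C \<in> ?cos" and D: "D \<in> ?cos"
        and eq: "\<phi> (SOME x. C = (+) x ` principal_ideal a) = \<phi> (SOME x. D = (+) x ` principal_ideal a)"
      obtain x0 where "C = (+) x0 ` principal_ideal a" using C by blast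
      hence c: "C = (+) (SOME x. C = (+) x ` principal_ideal a) ` principal_ideal a"
        by (rule someI[of "\<lambda>x. C = (+) x ` principal_ideal a"])
      obtain x0 where "D = (+) x0 ` principal_ideal a" using D by blast
      hence d: "D = (+) (SOME x. D = (+) x ` principal_ideal a) ` principal_ideal a"
        by (rule someI[of "\<lambda>x. D = (+) x ` principal_ideal a"])
      show "C = D" using c d eq key by metis
    qed
    show "(\<lambda>C. \<phi> (SOME x. C = (+) x ` principal_ideal a)) ` ?cos = S"
    proof (intro equalityI subsetI)
      fix z assume "z \<in> (\<lambda>C. \<phi> (SOME x. C = (+) x ` principal_ideal a)) ` ?cos"
      thus "z \<in> S" by (auto simp: S_def)
    next
      fix z assume "z \<in> S"
      then obtain x where x: "z = \<phi> x" by (auto simp: S_def)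
      let ?C = "(+) x ` principal_ideal a"
      have "?C = (+) (SOME y. ?C = (+) y ` principal_ideal a) ` principal_ideal a"
        by (rule someI[of _ x]) simp
      hence "\<phi> (SOME y. ?C = (+) y ` principal_ideal a) = z" using key x by metis
      thus "z \<in> (\<lambda>C. \<phi> (SOME x. C = (+) x ` principal_ideal a)) ` ?cos" by force
    qed
  qed
  hence "card ?cos = card S" by (rule bij_betw_same_card)
  thus ?thesis using qdef by (simp add: residue_card_def)
qed

end



lemma card_roots_sep:
  fixes P :: "'k::alg_closed_field poly"
  assumes "P \<noteq> 0" "\<And>z. poly P z = 0 \<Longrightarrow> poly (pderiv P) z \<noteq> 0"
  shows "card {z. poly P z = 0} = degree P"
  using assms
proof (induction "degree P" arbitrary: P rule: less_induct)
  case (less P)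
  show ?case
  proof (cases "degree P = 0")
    case True
    then obtain c where "P = [:c:]" by (auto elim: degree_eq_zeroE)
    hence "{z. poly P z = 0} = {}" using less.prems by auto
    thus ?thesis using True by simp
  next
    case False
    then obtain z where z: "poly P z = 0" using alg_closed_imp_poly_has_root by blast
    hence "[:-z, 1:] dvd P" using poly_eq_0_iff_dvd by blast
    then obtain Q where Q: "P = [:-z, 1:] * Q" by (elim dvdE)
    have Q0: "Q \<noteq> 0" using less.prems Q by auto
    have deg: "degree P = Suc (degree Q)" unfolding Q using Q0 by (subst degree_mult_eq) auto
    have dP: "pderiv P = Q + [:-z, 1:] * pderiv Q"
      unfolding Q pderiv_mult by (simp add: pderiv_pCons)
    have Qz: "poly Q z \<noteq> 0" using less.prems(2)[OF z] dP by simp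
    have Qsep: "poly (pderiv Q) w \<noteq> 0" if "poly Q w = 0" for w
    proof -
      have "poly P w = 0" using that Q by simp
      hence "poly (pderiv P) w \<noteq> 0" using less.prems(2) by blast
      thus ?thesis using dP that by auto
    qed
    have IH: "card {w. poly Q w = 0} = degree Q"
      using less.hyps[of Q] deg Q0 Qsep by auto
    have roots: "{w. poly P w = 0} = insert z {w. poly Q w = 0}"
      using Q by auto
    have "finite {w. poly Q w = 0}" using Q0 poly_roots_finite by blast
    hence "card {w. poly P w = 0} = Suc (card {w. poly Q w = 0})"
      unfolding roots using Qz by simp
    thus ?thesis using IH deg by simp
  qed
qed

context CR
begin

lemma of_nat_p_K: "(of_nat p :: 'k) = 0"
  using char_p by (simp add: of_nat_eq_0_iff_char_dvd)

lemma card_roots_unity: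
  assumes n: "n > 0" "\<not> p dvd n"
  shows "card {z::'k. z ^ n = 1} = n"
proof -
  define P :: "'k poly" where "P = monom 1 n - 1"
  have polyP: "poly P z = z ^ n - 1" for z by (simp add: P_def poly_monom)
  have degP: "degree P = n"
  proof -
    have "P = monom 1 n + (- 1)" by (simp add: P_def)
    also have "degree \<dots> = n" using n by (subst degree_add_eq_left) (auto simp: degree_monom_eq)
    finally show ?thesis .
  qed
  have P0: "P \<noteq> 0" using degP n by auto
  have dP: "pderiv P = monom (of_nat n) (n - 1)"
    by (simp add: P_def pderiv_diff pderiv_monom)
  have nz: "(of_nat n :: 'k) \<noteq> 0" using of_nat_K_nonzero n by blast
  have "card {z. poly P z = 0} = n"
  proof (subst card_roots_sep)
    show "P \<noteq> 0" by fact
    fix z assume "poly P z = 0"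
    hence z1: "z ^ n = 1" using polyP by simp
    hence "z \<noteq> 0" using n by (auto simp: power_0_left)
    thus "poly (pderiv P) z \<noteq> 0" using nz by (simp add: dP poly_monom)
  qed (simp add: degP)
  thus ?thesis using polyP by simp
qed

lemma card_roots_unity_le:
  assumes n: "n > 0"
  shows "card {z::'k. z ^ n = 1} \<le> n"
proof -
  define P :: "'k poly" where "P = monom 1 n + (- 1)"
  have polyP: "poly P z = z ^ n - 1" for z by (simp add: P_def poly_monom)
  have degP: "degree P = n" unfolding P_def using n by (subst degree_add_eq_left) (auto simp: degree_monom_eq)
  have "P \<noteq> 0" using degP n by auto
  hence "card {z. poly P z = 0} \<le> n" using card_poly_roots_bound degP by metis
  thus ?thesis using polyP by simp
qed

lemma S_card_ge2: "q \<ge> 2"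
proof -
  have "{0, 1} \<subseteq> S" using S_zero S_one by auto
  hence "card {0::'k, 1} \<le> card S" using finite_S card_mono by blast
  thus ?thesis using card_S by simp
qed

lemma S_pow_q: "x \<in> S \<Longrightarrow> x ^ q = x"
proof (cases "x = 0")
  case True thus ?thesis using S_card_ge2 by (simp add: power_0_left)
next
  case False
  assume x: "x \<in> S"
  let ?T = "S - {0}"
  have fin: "finite ?T" using finite_S by simp
  have cT: "card ?T = q - 1" using card_S S_zero finite_S by (simp add: card_Diff_singleton)
  have "(\<Prod>y\<in>?T. x * y) = (\<Prod>y\<in>?T. y)"
    by (rule prod.reindex_bij_witness[of _ "\<lambda>y. y / x" "\<lambda>y. x * y"])
       (use False x in \<open>auto simp: S_mult divide_inverse S_inverse\<close>)
  hence "x ^ card ?T * (\<Prod>y\<in>?T. y) = (\<Prod>y\<in>?T. y)" by (simp add: prod.distrib)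
  moreover have "(\<Prod>y\<in>?T. y) \<noteq> 0" using fin by simp
  ultimately have "x ^ (q - 1) = 1" using cT by simp
  hence "x * x ^ (q - 1) = x" by simp
  thus ?thesis using S_card_ge2 by (metis power_eq_if not_numeral_le_zero)
qed

lemma pow_q_S: "(x::'k) ^ q = x \<Longrightarrow> x \<in> S"
proof -
  assume hx: "x ^ q = x"
  define P :: "'k poly" where "P = monom 1 q + [:0, -1:]"
  have polyP: "poly P z = z ^ q - z" for z by (simp add: P_def poly_monom)
  have degP: "degree P = q" unfolding P_def using S_card_ge2
    by (subst degree_add_eq_left) (auto simp: degree_monom_eq)
  have "P \<noteq> 0" using degP S_card_ge2 by auto
  hence le: "card {z. poly P z = 0} \<le> q" using card_poly_roots_bound degP by metis
  have fin: "finite {z. poly P z = 0}" using \<open>P \<noteq> 0\<close> poly_roots_finite by blast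
  have sub: "S \<subseteq> {z. poly P z = 0}" using S_pow_q polyP by auto
  have "S = {z. poly P z = 0}"
    using card_subset_eq[OF fin sub] le card_S card_mono[OF fin sub] by simp
  thus "x \<in> S" using hx polyP by simp
qed

lemma S_pow_qs: "x \<in> S \<Longrightarrow> x ^ (q ^ s) = x"
  by (induction s) (simp_all add: power_mult S_pow_q)

lemma of_nat_mod_p: "(of_nat n :: 'k) = of_nat (n mod p)"
proof -
  have "(of_nat n :: 'k) = of_nat (p * (n div p) + n mod p)" by simp
  also have "\<dots> = of_nat (n mod p)" by (simp only: of_nat_add of_nat_mult of_nat_p_K) simp
  finally show ?thesis .
qed

lemma S_card_prime_power: "\<exists>m. q = p ^ m"
proof -
  have p2: "p \<ge> 2" using pprime prime_ge_2_nat by blast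
  define closed where "closed V \<longleftrightarrow> V \<subseteq> S \<and> 0 \<in> V \<and> (\<forall>x\<in>V. \<forall>y\<in>V. x + y \<in> V)" for V :: "'k set"
  have mult_cl: "of_nat n * x \<in> V" if "closed V" "x \<in> V" for V n x
    using that by (induction n) (auto simp: closed_def distrib_right)
  have main: "\<forall>V j. closed V \<and> card V = p ^ j \<and> card S - card V = n \<longrightarrow> (\<exists>m. card S = p ^ m)" for n
  proof (induction n rule: less_induct)
    case (less n)
    show ?case
    proof (intro allI impI)
      fix V j assume h: "closed V \<and> card V = p ^ j \<and> card S - card V = n"
      have VS: "V \<subseteq> S" and V0: "0 \<in> V" and Vadd: "\<And>x y. x \<in> V \<Longrightarrow> y \<in> V \<Longrightarrow> x + y \<in> V"
        using h by (auto simp: closed_def)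
      have finV: "finite V" using VS finite_S finite_subset by blast
      show "\<exists>m. card S = p ^ m"
      proof (cases "V = S")
        case True thus ?thesis using h by blast
      next
        case False
        then obtain x where x: "x \<in> S" "x \<notin> V" using VS by blast
        define V' where "V' = (\<lambda>(v, i). v + of_nat i * x) ` (V \<times> {..<p})"
        have negV: "- v \<in> V" if "v \<in> V" for v
        proof -
          have "of_nat (p - 1) * v \<in> V" using mult_cl h that by blast
          also have "of_nat (p - 1) * v = - v"
          proof -
            have "of_nat (p - 1) * v + v = of_nat p * v" using p2 by (simp add: of_nat_diff algebra_simps)
            thus ?thesis using of_nat_p_K by (simp add: eq_neg_iff_add_eq_0)
          qed
          finally show ?thesis .
        qed
        have inj: "inj_on (\<lambda>(v, i). v + of_nat i * x) (V \<times> {..<p})"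
        proof -
          have key: "v = v' \<and> i = i'" if "v \<in> V" "v' \<in> V" "i < p" "i' < p" "i' \<le> i"
              "v + of_nat i * x = v' + of_nat i' * x" for v v' i i'
          proof -
            have "of_nat (i - i') * x = v' + (- v)" using that by (simp add: of_nat_diff algebra_simps)
            moreover have "v' + (- v) \<in> V" using Vadd negV that by blast
            ultimately have dV: "of_nat (i - i') * x \<in> V" by simp
            have "i = i'"
            proof (rule ccontr)
              assume "i \<noteq> i'"
              hence d: "i - i' \<noteq> 0" "i - i' < p" using that by auto
              have "coprime (i - i') p"
                using d pprime by (metis coprime_commute dvd_imp_le neq0_conv prime_imp_coprime_nat linorder_not_le)
              hence "gcd (i - i') p = 1" by simp
              then obtain u w where uw: "(i - i') * u = p * w + 1" using bezout_nat[OF d(1), of p] by auto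
              have "of_nat u * (of_nat (i - i') * x) \<in> V" using mult_cl h dV by blast
              also have "of_nat u * (of_nat (i - i') * x) = (of_nat ((i - i') * u) :: 'k) * x" by (simp add: ac_simps)
              also have "\<dots> = x" unfolding uw by (simp add: of_nat_p_K)
              finally show False using x by simp
            qed
            thus ?thesis using that by simp
          qed
          show ?thesis
          proof (rule inj_onI)
            fix y z assume yz: "y \<in> V \<times> {..<p}" "z \<in> V \<times> {..<p}"
              "(\<lambda>(v, i). v + of_nat i * x) y = (\<lambda>(v, i). v + of_nat i * x) z"
            obtain v i where y: "y = (v, i)" by (cases y)
            obtain v' i' where z: "z = (v', i')" by (cases z)
            have "v = v' \<and> i = i'"
            proof (cases "i' \<le> i")
              case True thus ?thesis using key[of v v' i i'] yz y z by auto
            next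
              case False thus ?thesis using key[of v' v i' i] yz y z by auto
            qed
            thus "y = z" using y z by simp
          qed
        qed
        have cV': "card V' = p ^ Suc j"
          unfolding V'_def using card_image[OF inj] finV h by (simp add: card_cartesian_product)
        have closedV': "closed V'"
          unfolding closed_def
        proof (intro conjI ballI)
          show "V' \<subseteq> S" unfolding V'_def using VS x by (auto intro!: S_add S_mult S_of_nat)
          show "0 \<in> V'" unfolding V'_def using V0 pprime prime_gt_0_nat
            by (auto intro!: image_eqI[of _ _ "(0, 0)"])
          fix y z assume "y \<in> V'" "z \<in> V'"
          then obtain v i v' i' where yz: "v \<in> V" "i < p" "v' \<in> V" "i' < p"
              "y = v + of_nat i * x" "z = v' + of_nat i' * x" unfolding V'_def by auto
          have "y + z = (v + v') + of_nat ((i + i') mod p) * x"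
          proof -
            have "y + z = (v + v') + (of_nat (i + i') :: 'k) * x" using yz by (simp add: algebra_simps)
            thus ?thesis using of_nat_mod_p[of "i + i'"] by simp
          qed
          thus "y + z \<in> V'" unfolding V'_def using yz Vadd pprime prime_gt_0_nat
            by (auto intro!: image_eqI[of _ _ "(v + v', (i + i') mod p)"])
        qed
        have "V' \<subseteq> S" using closedV' by (simp add: closed_def)
        hence "card V' \<le> card S" using finite_S card_mono by blast
        moreover have "card V < card V'" using cV' h p2 by simp
        ultimately have "card S - card V' < n" using h by linarith
        thus ?thesis using less.IH closedV' cV' by blast
      qed
    qed
  qed
  have "closed {0}" by (simp add: closed_def S_zero)
  moreover have "card {0::'k} = p ^ 0" by simp
  ultimately have "\<exists>m. card S = p ^ m" using main[of "card S - card {0::'k}"] by blast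
  thus ?thesis using card_S by simp
qed

lemma frob_add: "((x::'k) + y) ^ (p ^ n) = x ^ (p ^ n) + y ^ (p ^ n)"
  using freshmans_dream'[OF prime_char, of "p ^ n" n x y] char_p by simp

lemma frob_sum: "(sum (f :: _ \<Rightarrow> 'k) A) ^ (p ^ n) = (\<Sum>i\<in>A. f i ^ (p ^ n))"
  using freshmans_dream_sum'[OF prime_char, of "p ^ n" n f A] char_p by simp

lemma frob_diff: "((x::'k) - y) ^ (p ^ n) = x ^ (p ^ n) - y ^ (p ^ n)"
  using frob_add[of "x - y" y n] by (simp add: algebra_simps)

lemma frob_inj: "(x::'k) ^ (p ^ n) = y ^ (p ^ n) \<Longrightarrow> x = y"
  using frob_diff[of x y n] by simp

end



section \<open>Characters and the Fourier transform\<close>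

definition chi :: "nat \<Rightarrow> (nat \<Rightarrow> 'k::field) \<Rightarrow> (nat \<Rightarrow> nat) \<Rightarrow> 'k" where
  "chi r \<nu> g = (\<Prod>k<r. \<nu> k ^ g k)"

definition four :: "nat \<Rightarrow> (nat \<Rightarrow> nat) \<Rightarrow> ((nat \<Rightarrow> nat) \<Rightarrow> 'k::field) \<Rightarrow> (nat \<Rightarrow> 'k) \<Rightarrow> 'k" where
  "four r e c \<nu> = (\<Sum>g\<in>exps r e. c g * chi r \<nu> g)"

definition pw :: "(nat \<Rightarrow> 'k::field) \<Rightarrow> nat \<Rightarrow> (nat \<Rightarrow> 'k)" where
  "pw \<nu> n = (\<lambda>k. \<nu> k ^ n)"

lemma Hprod_iff: "\<nu> \<in> Hprod r e \<longleftrightarrow> (\<forall>k<r. \<nu> k ^ e k = 1) \<and> (\<forall>k\<ge>r. \<nu> k = 1)"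
  by (simp add: Hprod_def)

lemma pow_mod_unity: "(z::'a::monoid_mult) ^ e = 1 \<Longrightarrow> z ^ (n mod e) = z ^ n"
proof -
  assume z: "z ^ e = 1"
  have "z ^ n = z ^ (e * (n div e) + n mod e)" by simp
  also have "\<dots> = z ^ (n mod e)" by (simp only: power_add power_mult z power_one mult_1_left)
  finally show ?thesis by simp
qed

lemma chi_gadd: "\<nu> \<in> Hprod r e \<Longrightarrow> chi r \<nu> (gadd r e i j) = chi r \<nu> i * chi r \<nu> j"
  by (simp add: chi_def gadd_def Hprod_iff pow_mod_unity power_add prod.distrib)

lemma Hprod_nonzero: "\<nu> \<in> Hprod r e \<Longrightarrow> \<forall>k<r. 0 < e k \<Longrightarrow> \<nu> k \<noteq> 0"
proof (cases "k < r")
  case True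
  assume "\<nu> \<in> Hprod r e" "\<forall>k<r. 0 < e k"
  hence "\<nu> k ^ e k = 1" "e k > 0" using True by (auto simp: Hprod_iff)
  thus ?thesis by (metis zero_power zero_neq_one)
qed (auto simp: Hprod_iff)

lemma inv_Hprod: "\<nu> \<in> Hprod r e \<Longrightarrow> inv_tuple \<nu> \<in> Hprod r e"
  by (simp add: Hprod_iff inv_tuple_def power_inverse)

lemma pow_swap: "((z::'a::monoid_mult) ^ n) ^ m = (z ^ m) ^ n"
  by (simp only: power_mult[symmetric] mult.commute)

lemma pw_Hprod: "\<nu> \<in> Hprod r e \<Longrightarrow> pw \<nu> n \<in> Hprod r e"
  by (simp add: Hprod_iff pw_def pow_swap[of _ n])

lemma chi_gneg:
  assumes E: "\<forall>k<r. 0 < e k" and nu: "\<nu> \<in> Hprod r e" and h: "h \<in> exps r e"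
  shows "chi r \<nu> (gneg r e h) = chi r (inv_tuple \<nu>) h"
  unfolding chi_def
proof (rule prod.cong[OF refl])
  fix k assume "k \<in> {..<r}"
  hence k: "k < r" by simp
  have z: "\<nu> k ^ e k = 1" "\<nu> k \<noteq> 0" using nu k Hprod_nonzero[OF nu E] by (auto simp: Hprod_iff)
  have hk: "h k < e k" using h k by (simp add: exps_iff)
  have "\<nu> k ^ ((e k - h k) mod e k) = \<nu> k ^ (e k - h k)" using pow_mod_unity[OF z(1)] by simp
  moreover have "\<nu> k ^ (e k - h k) * \<nu> k ^ h k = 1" using hk z by (simp flip: power_add)
  hence "\<nu> k ^ (e k - h k) = inverse (\<nu> k) ^ h k" using z by (simp add: power_inverse field_simps)
  ultimately show "\<nu> k ^ gneg r e h k = inv_tuple \<nu> k ^ h k" using k by (simp add: gneg_def inv_tuple_def)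
qed

lemma chi_mult: "chi r \<nu> g * chi r \<eta> g = chi r (\<lambda>k. \<nu> k * \<eta> k) g"
  by (simp add: chi_def prod.distrib power_mult_distrib)

lemma chi_pow: "chi r \<nu> g ^ n = chi r (pw \<nu> n) g"
  unfolding chi_def pw_def prod_power_distrib by (rule prod.cong[OF refl]) (rule pow_swap)

lemma chi_zero: "chi r \<nu> (\<lambda>_. 0) = 1"
  by (simp add: chi_def)

lemma four_diff: "four r e (\<lambda>g. x g - y g) \<nu> = four r e x \<nu> - four r e y \<nu>"
  by (simp add: four_def left_diff_distrib sum_subtractf)

lemma four_conv:
  assumes E: "\<forall>k<r. 0 < e k" and nu: "\<nu> \<in> Hprod r e"
  shows "four r e (conv r e x y) \<nu> = four r e x \<nu> * four r e y \<nu>"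
proof -
  have "four r e (conv r e x y) \<nu> = (\<Sum>m\<in>exps r e. \<Sum>i\<in>exps r e. x i * y (gsub r e m i) * chi r \<nu> m)"
    by (simp add: four_def conv_def sum_distrib_right)
  also have "\<dots> = (\<Sum>i\<in>exps r e. x i * (\<Sum>m\<in>exps r e. y (gsub r e m i) * chi r \<nu> m))"
    by (subst sum.swap) (simp add: sum_distrib_left mult.assoc)
  also have "\<dots> = (\<Sum>i\<in>exps r e. x i * (\<Sum>l\<in>exps r e. y l * chi r \<nu> l * chi r \<nu> i))"
  proof (rule sum.cong[OF refl])
    fix i assume i: "i \<in> exps r e"
    have "(\<Sum>m\<in>exps r e. y (gsub r e m i) * chi r \<nu> m) =
          (\<Sum>l\<in>exps r e. y (gsub r e (gadd r e l i) i) * chi r \<nu> (gadd r e l i))"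
      using sum_reindex_gadd[OF E i, of "\<lambda>m. y (gsub r e m i) * chi r \<nu> m"] by simp
    also have "\<dots> = (\<Sum>l\<in>exps r e. y l * chi r \<nu> l * chi r \<nu> i)"
    proof (rule sum.cong[OF refl])
      fix l assume l: "l \<in> exps r e"
      have "gsub r e (gadd r e l i) i = l" using gsub_add_cancel[OF E i l] gadd_comm by metis
      thus "y (gsub r e (gadd r e l i) i) * chi r \<nu> (gadd r e l i) = y l * chi r \<nu> l * chi r \<nu> i"
        using chi_gadd[OF nu] by (simp add: mult.assoc)
    qed
    finally show "x i * (\<Sum>m\<in>exps r e. y (gsub r e m i) * chi r \<nu> m) = x i * (\<Sum>l\<in>exps r e. y l * chi r \<nu> l * chi r \<nu> i)"
      by simp
  qed
  also have "\<dots> = (\<Sum>i\<in>exps r e. (x i * chi r \<nu> i) * (\<Sum>l\<in>exps r e. y l * chi r \<nu> l))"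
    by (rule sum.cong[OF refl]) (simp add: sum_distrib_left sum_distrib_right ac_simps)
  also have "\<dots> = four r e x \<nu> * four r e y \<nu>"
    by (simp add: four_def sum_distrib_right)
  finally show ?thesis .
qed

lemma four_star:
  assumes E: "\<forall>k<r. 0 < e k" and nu: "\<nu> \<in> Hprod r e"
  shows "four r e (star r e x) \<nu> = four r e x (inv_tuple \<nu>)"
proof -
  have "four r e (star r e x) \<nu> = (\<Sum>g\<in>exps r e. x (gneg r e g) * chi r \<nu> g)"
    by (simp add: four_def star_def)
  also have "\<dots> = (\<Sum>g\<in>exps r e. x (gneg r e (gneg r e g)) * chi r \<nu> (gneg r e g))"
    by (rule sum.reindex_bij_witness[of _ "gneg r e" "gneg r e"]) (auto simp: gneg_gneg[OF E] gneg_exps[OF E])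
  also have "\<dots> = four r e x (inv_tuple \<nu>)"
    unfolding four_def by (rule sum.cong[OF refl]) (simp add: gneg_gneg[OF E] chi_gneg[OF E nu])
  finally show ?thesis .
qed

lemma card_ext_funs:
  fixes r :: nat
  assumes "\<And>k. k < r \<Longrightarrow> finite (B k)"
  shows "card {f. (\<forall>k<r. f k \<in> B k) \<and> (\<forall>k\<ge>r. f k = d)} = (\<Prod>k<r. card (B k))"
    and "finite {f. (\<forall>k<r. f k \<in> B k) \<and> (\<forall>k\<ge>r. f k = d)}"
proof -
  let ?ext = "\<lambda>f k. if k < r then f k else d"
  have eq: "{f. (\<forall>k<r. f k \<in> B k) \<and> (\<forall>k\<ge>r. f k = d)} = ?ext ` (PiE {..<r} B)"
  proof (intro equalityI subsetI)
    fix f assume f: "f \<in> {f. (\<forall>k<r. f k \<in> B k) \<and> (\<forall>k\<ge>r. f k = d)}"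
    have "f k = ?ext (restrict f {..<r}) k" for k
    proof (cases "k < r")
      case False thus ?thesis using f by simp
    qed simp
    hence "f = ?ext (restrict f {..<r})" by blast
    moreover have "restrict f {..<r} \<in> PiE {..<r} B" using f by auto
    ultimately show "f \<in> ?ext ` (PiE {..<r} B)" by blast
  next
    fix f assume "f \<in> ?ext ` (PiE {..<r} B)"
    then obtain g where g: "g \<in> PiE {..<r} B" "f = ?ext g" by blast
    have "\<forall>k<r. f k \<in> B k" using g by (auto simp: PiE_iff)
    moreover have "\<forall>k\<ge>r. f k = d" using g by simp
    ultimately show "f \<in> {f. (\<forall>k<r. f k \<in> B k) \<and> (\<forall>k\<ge>r. f k = d)}" by simp
  qed
  have inj: "inj_on ?ext (PiE {..<r} B)"
  proof (rule inj_onI)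
    fix f g assume f: "f \<in> PiE {..<r} B" and g: "g \<in> PiE {..<r} B" and h: "?ext f = ?ext g"
    show "f = g"
    proof (rule PiE_ext[OF f g])
      fix k assume "k \<in> {..<r}"
      thus "f k = g k" using fun_cong[OF h, of k] by simp
    qed
  qed
  have fin: "finite (PiE {..<r} B)" using assms by (intro finite_PiE) auto
  show "card {f. (\<forall>k<r. f k \<in> B k) \<and> (\<forall>k\<ge>r. f k = d)} = (\<Prod>k<r. card (B k))"
    unfolding eq card_image[OF inj] by (simp add: card_PiE)
  show "finite {f. (\<forall>k<r. f k \<in> B k) \<and> (\<forall>k\<ge>r. f k = d)}"
    unfolding eq using fin by simp
qed

locale CRE = CR a t \<phi> p q for a :: "'r::comm_ring_1" and t and \<phi> :: "'r \<Rightarrow> 'k::alg_closed_field" and p q +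
  fixes r :: nat and e :: "nat \<Rightarrow> nat"
  assumes epos: "\<forall>k<r. 0 < e k" and ecop: "\<forall>k<r. \<not> p dvd e k"
begin

abbreviation G where "G \<equiv> exps r e"
abbreviation H where "H \<equiv> (Hprod r e :: (nat \<Rightarrow> 'k) set)"

lemma H_eq: "H = {f. (\<forall>k<r. f k \<in> {z. z ^ e k = 1}) \<and> (\<forall>k\<ge>r. f k = 1)}"
  by (auto simp: Hprod_def)

lemma G_eq: "G = {f. (\<forall>k<r. f k \<in> {..<e k}) \<and> (\<forall>k\<ge>r. f k = 0)}"
  by (auto simp: exps_def)

lemma finite_roots_K: "n > 0 \<Longrightarrow> finite {z::'k. z ^ n = 1}"
proof -
  assume n: "n > 0"
  define P :: "'k poly" where "P = monom 1 n + (- 1)"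
  have polyP: "poly P z = z ^ n - 1" for z by (simp add: P_def poly_monom)
  have degP: "degree P = n" unfolding P_def using n by (subst degree_add_eq_left) (auto simp: degree_monom_eq)
  have "P \<noteq> 0" using degP n by auto
  hence "finite {z. poly P z = 0}" by (rule poly_roots_finite)
  thus ?thesis using polyP by simp
qed

lemma finite_H: "finite H"
  unfolding H_eq by (rule card_ext_funs(2)) (use finite_roots_K epos in auto)

lemma card_H: "card H = (\<Prod>k<r. e k)"
proof -
  have "card H = (\<Prod>k<r. card {z::'k. z ^ e k = 1})"
    unfolding H_eq by (rule card_ext_funs(1)) (use finite_roots_K epos in auto)
  also have "\<dots> = (\<Prod>k<r. e k)"
    by (rule prod.cong[OF refl]) (use card_roots_unity epos ecop in auto)
  finally show ?thesis .
qed

lemma card_G: "card G = (\<Prod>k<r. e k)"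
proof -
  have "card G = (\<Prod>k<r. card {..<e k})"
    unfolding G_eq by (rule card_ext_funs(1)) auto
  thus ?thesis by simp
qed

lemma prod_e_nz: "(of_nat (\<Prod>k<r. e k) :: 'k) \<noteq> 0"
  using of_nat_K_nonzero ecop by (simp add: of_nat_prod)

lemma orthG:
  assumes eta: "\<eta> \<in> H"
  shows "(\<Sum>g\<in>G. chi r \<eta> g) = (if \<forall>k<r. \<eta> k = 1 then of_nat (card G) else 0)"
proof (cases "\<forall>k<r. \<eta> k = 1")
  case True
  hence "chi r \<eta> g = 1" for g by (simp add: chi_def)
  thus ?thesis using True by simp
next
  case False
  then obtain k where k: "k < r" "\<eta> k \<noteq> 1" by blast
  have ek: "e k > 1"
  proof (rule ccontr)
    assume "\<not> e k > 1"
    hence "e k = 1" using epos k by force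
    moreover have "\<eta> k ^ e k = 1" using eta k by (simp add: Hprod_iff)
    ultimately show False using k by simp
  qed
  define u where "u = (\<lambda>j. if j = k then 1 else 0 :: nat)"
  have u: "u \<in> G" using ek k epos by (auto simp: exps_iff u_def)
  have chiu: "chi r \<eta> u = \<eta> k"
  proof -
    have "chi r \<eta> u = (\<Prod>j<r. if j = k then \<eta> j else 1)" unfolding chi_def u_def
      by (rule prod.cong) auto
    thus ?thesis using k by simp
  qed
  have "(\<Sum>g\<in>G. chi r \<eta> g) = (\<Sum>g\<in>G. chi r \<eta> (gadd r e g u))"
    using sum_reindex_gadd[OF epos u, of "chi r \<eta>"] by simp
  also have "\<dots> = (\<Sum>g\<in>G. chi r \<eta> g) * \<eta> k"
    by (simp add: chi_gadd[OF eta] chiu sum_distrib_right)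
  finally have "(\<Sum>g\<in>G. chi r \<eta> g) * (\<eta> k - 1) = 0" by (simp add: algebra_simps)
  hence "(\<Sum>g\<in>G. chi r \<eta> g) = 0" using k by simp
  thus ?thesis using False by (simp only: if_False)
qed

lemma orthH:
  assumes d: "d \<in> G" "d \<noteq> (\<lambda>_. 0)"
  shows "(\<Sum>\<nu>\<in>H. chi r \<nu> d) = 0"
proof -
  obtain k where k0: "d k \<noteq> 0" using d by auto
  have k: "k < r" using d k0 by (meson exps_iff not_le)
  have dk: "0 < d k" "d k < e k" using d k k0 by (auto simp: exps_iff)
  have "\<not> {z::'k. z ^ e k = 1} \<subseteq> {z. z ^ d k = 1}"
  proof
    assume sub: "{z::'k. z ^ e k = 1} \<subseteq> {z. z ^ d k = 1}"
    have "card {z::'k. z ^ e k = 1} \<le> card {z::'k. z ^ d k = 1}"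
      by (rule card_mono[OF finite_roots_K[OF dk(1)] sub])
    also have "\<dots> \<le> d k" by (rule card_roots_unity_le[OF dk(1)])
    finally show False using card_roots_unity[of "e k"] epos ecop k dk by simp
  qed
  then obtain \<zeta> :: 'k where z: "\<zeta> ^ e k = 1" "\<zeta> ^ d k \<noteq> 1" by blast
  have z0: "\<zeta> \<noteq> 0" using z epos k by (auto simp: power_0_left)
  define T where "T = (\<lambda>\<nu> :: nat \<Rightarrow> 'k. \<nu>(k := \<zeta> * \<nu> k))"
  define T' where "T' = (\<lambda>\<nu> :: nat \<Rightarrow> 'k. \<nu>(k := inverse \<zeta> * \<nu> k))"
  have TH: "T \<nu> \<in> H" if "\<nu> \<in> H" for \<nu>
    using that z k by (auto simp: T_def Hprod_iff power_mult_distrib)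
  have T'H: "T' \<nu> \<in> H" if "\<nu> \<in> H" for \<nu>
    using that z k by (auto simp: T'_def Hprod_iff power_mult_distrib power_inverse)
  have chiT: "chi r (T \<nu>) d = \<zeta> ^ d k * chi r \<nu> d" for \<nu>
  proof -
    have "chi r (T \<nu>) d = (\<Prod>j<r. (if j = k then \<zeta> ^ d k else 1) * \<nu> j ^ d j)"
      unfolding chi_def T_def by (rule prod.cong) (auto simp: power_mult_distrib)
    also have "\<dots> = \<zeta> ^ d k * chi r \<nu> d" using k by (simp add: prod.distrib chi_def)
    finally show ?thesis .
  qed
  have "(\<Sum>\<nu>\<in>H. chi r \<nu> d) = (\<Sum>\<nu>\<in>H. chi r (T \<nu>) d)"
    by (rule sum.reindex_bij_witness[of _ T T']) (use z0 TH T'H in \<open>auto simp: T_def T'_def mult.assoc[symmetric]\<close>)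
  also have "\<dots> = \<zeta> ^ d k * (\<Sum>\<nu>\<in>H. chi r \<nu> d)" by (simp add: chiT sum_distrib_left)
  finally have "(\<zeta> ^ d k - 1) * (\<Sum>\<nu>\<in>H. chi r \<nu> d) = 0" by (simp add: algebra_simps)
  thus ?thesis using z by simp
qed

lemma four_inj:
  assumes h: "\<forall>\<nu>\<in>H. four r e c \<nu> = 0" and hG: "h \<in> G"
  shows "c h = 0"
proof -
  have "0 = (\<Sum>\<nu>\<in>H. four r e c \<nu> * chi r (inv_tuple \<nu>) h)" using h by simp
  also have "\<dots> = (\<Sum>\<nu>\<in>H. \<Sum>g\<in>G. c g * chi r \<nu> (gsub r e g h))"
    unfolding four_def sum_distrib_right
  proof (intro sum.cong refl)
    fix \<nu> g assume nu: "\<nu> \<in> H" and g: "g \<in> G"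
    have "chi r (inv_tuple \<nu>) h = chi r \<nu> (gneg r e h)" using chi_gneg[OF epos nu hG] by simp
    thus "c g * chi r \<nu> g * chi r (inv_tuple \<nu>) h = c g * chi r \<nu> (gsub r e g h)"
      by (simp add: gsub_def chi_gadd[OF nu] mult.assoc)
  qed
  also have "\<dots> = (\<Sum>g\<in>G. c g * (\<Sum>\<nu>\<in>H. chi r \<nu> (gsub r e g h)))"
    by (subst sum.swap) (simp add: sum_distrib_left)
  also have "\<dots> = (\<Sum>g\<in>G. if g = h then c h * of_nat (card H) else 0)"
  proof (rule sum.cong[OF refl])
    fix g assume g: "g \<in> G"
    show "c g * (\<Sum>\<nu>\<in>H. chi r \<nu> (gsub r e g h)) = (if g = h then c h * of_nat (card H) else 0)"
    proof (cases "g = h")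
      case True thus ?thesis using gsub_self[OF hG] by (simp add: chi_zero)
    next
      case False
      hence "gsub r e g h \<noteq> (\<lambda>_. 0)" using gsub_zero_iff[OF epos g hG] by simp
      thus ?thesis using orthH[OF gsub_exps[OF epos]] False by simp
    qed
  qed
  also have "\<dots> = c h * of_nat (card H)" using hG finite_exps by simp
  finally show ?thesis using card_H prod_e_nz by simp
qed

lemma frob_four:
  assumes cS: "\<forall>g\<in>G. c g \<in> S"
  shows "four r e c \<nu> ^ (q ^ s) = four r e c (pw \<nu> (q ^ s))"
proof -
  obtain m where m: "q = p ^ m" using S_card_prime_power by blast
  have qs: "q ^ s = p ^ (m * s)" by (simp add: m power_mult)
  have "four r e c \<nu> ^ (q ^ s) = (\<Sum>g\<in>G. (c g * chi r \<nu> g) ^ (q ^ s))"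
    unfolding four_def qs by (rule frob_sum)
  also have "\<dots> = four r e c (pw \<nu> (q ^ s))"
    unfolding four_def
    by (rule sum.cong[OF refl]) (simp add: power_mult_distrib chi_pow S_pow_qs cS)
  finally show ?thesis .
qed

end



context CRE
begin

lemma phi_conv: "(\<lambda>m. \<phi> (conv r e x y m)) = conv r e (\<lambda>g. \<phi> (x g)) (\<lambda>g. \<phi> (y g))"
  by (rule ext) (simp add: conv_def phi_sum phi_mult phi_zero)

lemma phi_star: "(\<lambda>m. \<phi> (star r e x m)) = star r e (\<lambda>g. \<phi> (x g))"
  by (rule ext) (simp add: star_def phi_zero)

lemma dual_antimono: "K \<subseteq> L \<Longrightarrow> dualA r e L \<subseteq> dualA r e K"
  by (auto simp: dualA_def)

lemma ideal_delta:
  assumes "idealA r e K" "x \<in> K" "h \<in> G"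
  shows "conv r e (delta h) x \<in> K"
  using assms delta_elemsA[OF assms(3)] by (auto simp: idealA_def mulA_conv[OF epos, symmetric])

lemma dual_conv:
  assumes K: "idealA r e K" and x: "x \<in> dualA r e K" and c: "c \<in> K"
  shows "conv r e x (star r e c) = (\<lambda>_. 0)"
proof (rule ext)
  fix m show "conv r e x (star r e c) m = 0"
  proof (cases "m \<in> G")
    case True
    have "conv r e x (star r e c) m = dotA r e x (conv r e (delta m) c)"
      by (rule dot_conv_delta[OF epos True, symmetric])
    also have "\<dots> = 0" using x ideal_delta[OF K c True] by (auto simp: dualA_def)
    finally show ?thesis .
  qed (simp add: conv_def)
qed

abbreviation h2 where "h2 \<equiv> t div 2"

lemma t_h2: "t = h2 + h2" using teven by presburger

lemma four_zero: "four r e (\<lambda>_. 0) \<nu> = 0"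
  by (simp add: four_def)

lemma T_dual: "dualA r e (trivial_code r e a t) = trivial_code r e a t"
proof (intro equalityI subsetI)
  fix x assume x: "x \<in> dualA r e (trivial_code r e a t)"
  hence xA: "x \<in> elemsA r e" by (simp add: dualA_def)
  have xg: "x g \<in> principal_ideal (a ^ h2)" if g: "g \<in> G" for g
  proof -
    have "(\<lambda>i. a ^ h2 * delta g i) \<in> trivial_code r e a t"
      using delta_elemsA[OF g] by (auto simp: trivial_code_def)
    hence "dotA r e x (\<lambda>i. a ^ h2 * delta g i) = 0" using x by (auto simp: dualA_def)
    hence "x g * a ^ h2 = 0" using g by (simp add: dotA_def delta_def if_distrib finite_exps cong: if_cong)
    hence "a ^ h2 * x g = 0" by (simp add: mult.commute)
    hence "x g \<in> principal_ideal (a ^ (t - h2))" by (rule ann[rotated]) simp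
    moreover have "t - h2 = h2" using t_h2 by simp
    ultimately show ?thesis by simp
  qed
  define y where "y = (\<lambda>g. if g \<in> G then (SOME z. x g = z * a ^ h2) else 0)"
  have "x = (\<lambda>i. a ^ h2 * y i)"
  proof (rule ext)
    fix i show "x i = a ^ h2 * y i"
    proof (cases "i \<in> G")
      case True
      hence "\<exists>z. x i = z * a ^ h2" using xg by (simp add: pid_iff)
      hence "x i = (SOME z. x i = z * a ^ h2) * a ^ h2" by (rule someI_ex)
      thus ?thesis using True by (simp add: y_def mult.commute)
    qed (use xA in \<open>simp add: y_def elemsA_iff\<close>)
  qed
  moreover have "y \<in> elemsA r e" by (simp add: y_def elemsA_iff)
  ultimately show "x \<in> trivial_code r e a t" by (auto simp: trivial_code_def)
next
  fix x assume x: "x \<in> trivial_code r e a t"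
  then obtain y where y: "y \<in> elemsA r e" "x = (\<lambda>i. a ^ h2 * y i)" by (auto simp: trivial_code_def)
  have xA: "x \<in> elemsA r e" using y by (simp add: elemsA_iff)
  have "dotA r e x c = 0" if cT: "c \<in> trivial_code r e a t" for c
  proof -
    obtain z where z: "c = (\<lambda>i. a ^ h2 * z i)" using cT unfolding trivial_code_def by blast
    have "dotA r e x c = (\<Sum>i\<in>G. a ^ t * (y i * z i))"
      unfolding dotA_def y(2) z by (rule sum.cong) (simp_all add: t_h2[symmetric] power_add[symmetric] ac_simps)
    thus ?thesis by (simp add: at_zero)
  qed
  thus "x \<in> dualA r e (trivial_code r e a t)" using xA by (simp add: dualA_def)
qed

lemma self_dual_in_T:
  assumes allsym: "\<forall>\<mu>\<in>H. orbitC q \<mu> = orbitC q (inv_tuple \<mu>)"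
    and K: "idealA r e K" and sd: "self_dual r e K" and xK: "x \<in> K"
  shows "x \<in> trivial_code r e a t"
proof (rule ccontr)
  assume notT: "x \<notin> trivial_code r e a t"
  have xA: "x \<in> elemsA r e" using K xK by (auto simp: idealA_def)
  have xd: "x \<in> dualA r e K" using sd xK by (simp add: self_dual_def)
  have cx: "conv r e x (star r e x) = (\<lambda>_. 0)" by (rule dual_conv[OF K xd xK])
  define P where "P k \<longleftrightarrow> (\<forall>g\<in>G. x g \<in> principal_ideal (a ^ k))" for k
  have P0: "P 0" by (simp add: P_def pid_iff)
  have nPh: "\<not> P h2"
  proof
    assume Ph: "P h2"
    define y where "y = (\<lambda>g. if g \<in> G then (SOME z. x g = z * a ^ h2) else 0)"
    have "x = (\<lambda>i. a ^ h2 * y i)"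
    proof (rule ext)
      fix i show "x i = a ^ h2 * y i"
      proof (cases "i \<in> G")
        case True
        hence "\<exists>z. x i = z * a ^ h2" using Ph by (simp add: pid_iff P_def)
        hence "x i = (SOME z. x i = z * a ^ h2) * a ^ h2" by (rule someI_ex)
        thus ?thesis using True by (simp add: y_def mult.commute)
      qed (use xA in \<open>simp add: y_def elemsA_iff\<close>)
    qed
    moreover have "y \<in> elemsA r e" by (simp add: y_def elemsA_iff)
    ultimately show False using notT by (auto simp: trivial_code_def)
  qed
  obtain k where k: "k < h2" "P k" "\<not> P (Suc k)" using step_exists[of P h2] P0 nPh by blast
  define w where "w = (\<lambda>g. if g \<in> G then (SOME z. x g = z * a ^ k) else 0)"
  have xw: "x = (\<lambda>i. a ^ k * w i)"
  proof (rule ext)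
    fix i show "x i = a ^ k * w i"
    proof (cases "i \<in> G")
      case True
      hence "\<exists>z. x i = z * a ^ k" using k(2) by (simp add: pid_iff P_def)
      hence "x i = (SOME z. x i = z * a ^ k) * a ^ k" by (rule someI_ex)
      thus ?thesis using True by (simp add: w_def mult.commute)
    qed (use xA in \<open>simp add: w_def elemsA_iff\<close>)
  qed
  obtain g0 where g0: "g0 \<in> G" "x g0 \<notin> principal_ideal (a ^ Suc k)" using k(3) by (auto simp: P_def)
  have wg0: "w g0 \<notin> principal_ideal a"
  proof
    assume "w g0 \<in> principal_ideal a"
    then obtain z where "w g0 = z * a" by (auto simp: pid_iff)
    hence "x g0 = z * a ^ Suc k" using xw by (simp add: ac_simps)
    thus False using g0 by (auto simp: pid_iff)
  qed
  define c where "c = (\<lambda>g. \<phi> (w g))"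
  have cw: "conv r e w (star r e w) m \<in> principal_ideal a" for m
  proof -
    have "conv r e x (star r e x) = (\<lambda>i. a ^ k * (a ^ k * conv r e w (star r e w) i))"
      unfolding xw star_smul conv_smul_left conv_smul_right[OF epos] ..
    hence "a ^ (k + k) * conv r e w (star r e w) m = 0" using cx
      by (simp add: power_add mult.assoc fun_eq_iff)
    hence "conv r e w (star r e w) m \<in> principal_ideal (a ^ (t - (k + k)))"
      by (rule ann[rotated]) (use k t_h2 in linarith)
    moreover have "1 \<le> t - (k + k)" using k t_h2 by linarith
    ultimately show ?thesis using pid_pow_mono[of 1 "t - (k + k)"] by simp
  qed
  have cc: "conv r e c (star r e c) = (\<lambda>_. 0)"
  proof -
    have "conv r e c (star r e c) = (\<lambda>m. \<phi> (conv r e w (star r e w) m))"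
      unfolding c_def phi_conv phi_star ..
    also have "\<dots> = (\<lambda>_. 0)" using cw phi_ker by auto
    finally show ?thesis .
  qed
  have cS: "\<forall>g\<in>G. c g \<in> S" by (simp add: c_def S_def)
  have four0: "four r e c \<mu> = 0" if mu: "\<mu> \<in> H" for \<mu>
  proof -
    have "four r e c \<mu> * four r e c (inv_tuple \<mu>) = four r e (conv r e c (star r e c)) \<mu>"
      using four_conv[OF epos mu, of c "star r e c"] four_star[OF epos mu, of c] by simp
    also have "\<dots> = 0" by (simp add: cc four_zero)
    finally have "four r e c \<mu> * four r e c (inv_tuple \<mu>) = 0" .
    moreover have "inv_tuple \<mu> \<in> orbitC q (inv_tuple \<mu>)"
      by (auto simp: orbitC_def intro: exI[of _ 0])
    hence "inv_tuple \<mu> \<in> orbitC q \<mu>" using allsym mu by simp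
    then obtain s where s: "inv_tuple \<mu> = pw \<mu> (q ^ s)" by (auto simp: orbitC_def pw_def)
    ultimately have "four r e c \<mu> * four r e c \<mu> ^ (q ^ s) = 0" using frob_four[OF cS, of \<mu> s] by simp
    thus ?thesis by auto
  qed
  have "c g0 = 0" using four_inj[of c g0] four0 g0 by blast
  thus False using wg0 phi_ker by (simp add: c_def)
qed

lemma no_nontrivial:
  assumes allsym: "\<forall>\<mu>\<in>H. orbitC q \<mu> = orbitC q (inv_tuple \<mu>)"
  shows "\<not> nontrivial_self_dual_code_exists r e a t"
proof
  assume "nontrivial_self_dual_code_exists r e a t"
  then obtain K where K: "idealA r e K" "self_dual r e K" "K \<noteq> trivial_code r e a t"
    by (auto simp: nontrivial_self_dual_code_exists_def)
  have sub: "K \<subseteq> trivial_code r e a t" using self_dual_in_T[OF allsym K(1) K(2)] by blast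
  have "trivial_code r e a t = dualA r e (trivial_code r e a t)" using T_dual by simp
  also have "\<dots> \<subseteq> dualA r e K" by (rule dual_antimono[OF sub])
  also have "\<dots> = K" using K(2) by (simp add: self_dual_def)
  finally show False using sub K(3) by blast
qed

end



primrec powA :: "nat \<Rightarrow> (nat \<Rightarrow> nat) \<Rightarrow> ((nat \<Rightarrow> nat) \<Rightarrow> 'a::comm_ring_1) \<Rightarrow> nat \<Rightarrow> ((nat \<Rightarrow> nat) \<Rightarrow> 'a)" where
  "powA r e x 0 = delta (\<lambda>_. 0)"
| "powA r e x (Suc n) = conv r e x (powA r e x n)"

lemma conv_swap4:
  assumes E: "\<forall>k<r. 0 < e k"
  shows "conv r e (conv r e x y) (conv r e z w) = conv r e (conv r e x z) (conv r e y w)"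
proof -
  have "conv r e (conv r e x y) (conv r e z w) = conv r e x (conv r e y (conv r e z w))" by (rule conv_assoc[OF E])
  also have "conv r e y (conv r e z w) = conv r e z (conv r e y w)"
    by (metis conv_assoc[OF E] conv_comm[OF E])
  also have "conv r e x (conv r e z (conv r e y w)) = conv r e (conv r e x z) (conv r e y w)"
    by (rule conv_assoc[OF E, symmetric])
  finally show ?thesis .
qed

lemma pid_conv:
  assumes "\<And>g. x g \<in> principal_ideal b" "\<And>g. y g \<in> principal_ideal c"
  shows "conv r e x y m \<in> principal_ideal (b * c)"
  unfolding conv_def using assms by (auto intro!: pid_sum pid_prod)

lemma pid_conv_left:
  assumes "\<And>g. y g \<in> principal_ideal c"
  shows "conv r e x y m \<in> principal_ideal c"
  unfolding conv_def using assms by (auto intro!: pid_sum pid_mult)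

lemma pid_star: "(\<And>g. x g \<in> principal_ideal b) \<Longrightarrow> star r e x m \<in> principal_ideal b"
  by (simp add: star_def)

context CRE
begin

lemma powA_elemsA: "powA r e x n \<in> elemsA r e"
  by (cases n) (simp_all add: delta_elemsA[OF zero_exps[OF epos]] conv_elemsA)

lemma powA_add: "powA r e x (m + n) = conv r e (powA r e x m) (powA r e x n)"
proof (induction m)
  case 0 thus ?case by (simp add: conv_delta0[OF epos powA_elemsA])
next
  case (Suc m) thus ?case by (simp add: conv_assoc[OF epos])
qed

lemma phi_delta0: "(\<lambda>g. \<phi> (delta (\<lambda>_. 0) g)) = delta (\<lambda>_. 0)"
  by (rule ext) (simp add: delta_def phi_one phi_zero)

lemma phi_powA: "(\<lambda>g. \<phi> (powA r e x n g)) = powA r e (\<lambda>g. \<phi> (x g)) n"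
  by (induction n) (simp_all add: phi_delta0 phi_conv)

lemma powA_idem: "y \<in> elemsA r e \<Longrightarrow> conv r e y y = y \<Longrightarrow> powA r e y (Suc n) = y"
  by (induction n) (simp_all add: conv_delta0_right[OF epos])

lemma finite_elemsA: "finite (elemsA r e :: ((nat \<Rightarrow> nat) \<Rightarrow> 'r) set)"
proof -
  have "elemsA r e \<subseteq> {f :: (nat \<Rightarrow> nat) \<Rightarrow> 'r. \<forall>x. (x \<in> G \<longrightarrow> f x \<in> UNIV) \<and> (x \<notin> G \<longrightarrow> f x = 0)}"
    by (auto simp: elemsA_iff)
  moreover have "finite {f :: (nat \<Rightarrow> nat) \<Rightarrow> 'r. \<forall>x. (x \<in> G \<longrightarrow> f x \<in> UNIV) \<and> (x \<notin> G \<longrightarrow> f x = 0)}"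
    by (rule finite_set_of_finite_funs) (simp_all add: finite_exps finite_R)
  ultimately show ?thesis by (rule finite_subset)
qed

lemma idem_power:
  fixes x :: "(nat \<Rightarrow> nat) \<Rightarrow> 'r"
  shows "\<exists>k\<ge>1. conv r e (powA r e x k) (powA r e x k) = powA r e x k"
proof -
  define F where "F = (\<lambda>n. powA r e x (Suc n))"
  have "range F \<subseteq> elemsA r e" using powA_elemsA by (auto simp: F_def simp del: powA.simps)
  hence "finite (range F)" using finite_elemsA finite_subset by blast
  hence "\<not> inj F" using finite_imageD infinite_UNIV_nat by blast
  then obtain i j where ij0: "i \<noteq> j" "F i = F j" unfolding inj_def by blast
  obtain i j where ij: "i < j" "F i = F j"
  proof (cases "i < j")
    case True thus ?thesis using that ij0 by blast
  next
    case False thus ?thesis using that[of j i] ij0 by simp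
  qed
  define d where "d = j - i"
  define b where "b = Suc i"
  have d: "d \<ge> 1" using ij by (simp add: d_def)
  have step: "powA r e x (b + l + d) = powA r e x (b + l)" for l
  proof -
    have "powA r e x (b + l + d) = powA r e x (l + Suc j)" using ij by (simp add: b_def d_def)
    also have "\<dots> = conv r e (powA r e x l) (F j)" unfolding F_def by (rule powA_add)
    also have "\<dots> = conv r e (powA r e x l) (F i)" using ij by simp
    also have "\<dots> = powA r e x (l + b)" unfolding F_def b_def by (rule powA_add[symmetric])
    finally show ?thesis by (simp add: add.commute)
  qed
  have steps: "powA r e x (b + l + d * c) = powA r e x (b + l)" for l c
  proof (induction c)
    case (Suc c)
    have "powA r e x (b + l + d * Suc c) = powA r e x (b + (l + d * c) + d)" by (simp add: algebra_simps)
    also have "\<dots> = powA r e x (b + l + d * c)" using step[of "l + d * c"] by (simp add: add.assoc)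
    finally show ?case using Suc by simp
  qed simp
  define k where "k = b * d"
  have kb: "k \<ge> b" using d by (simp add: k_def)
  have "powA r e x (k + k) = powA r e x (b + (k - b) + d * b)" using kb by (simp add: k_def mult.commute)
  also have "\<dots> = powA r e x (b + (k - b))" by (rule steps)
  also have "b + (k - b) = k" using kb by simp
  finally have "conv r e (powA r e x k) (powA r e x k) = powA r e x k" by (simp add: powA_add del: powA.simps)
  moreover have "k \<ge> 1" using kb by (simp add: b_def)
  ultimately show ?thesis by blast
qed

lemma idem_nil:
  fixes u :: "(nat \<Rightarrow> nat) \<Rightarrow> 'r"
  assumes uA: "u \<in> elemsA r e" and idem: "conv r e u u = u" and ua: "\<And>g. u g \<in> principal_ideal a"
  shows "u = (\<lambda>_. 0)"
proof -
  have pw: "powA r e u n g \<in> principal_ideal (a ^ n)" for n g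
  proof (induction n arbitrary: g)
    case 0 thus ?case by (simp add: pid_iff)
  next
    case (Suc n)
    have "powA r e u (Suc n) g = conv r e u (powA r e u n) g" by simp
    also have "\<dots> \<in> principal_ideal (a * a ^ n)" by (rule pid_conv[OF ua Suc.IH])
    finally show ?case by simp
  qed
  have "t = Suc (t - 1)" using t_pos by simp
  hence "u = powA r e u t" using powA_idem[OF uA idem, of "t - 1"] by simp
  thus ?thesis using pw[of t] pid_at by (metis ext)
qed

subsection \<open>Orbits\<close>

lemma orbit_eq: "orbitC q \<nu> = {pw \<nu> (q ^ s) | s. True}"
  by (simp add: orbitC_def pw_def)

lemma pw_pw: "pw (pw \<nu> m) n = pw \<nu> (m * n)"
  by (simp add: pw_def power_mult)

lemma orbit_sub: "\<beta> \<in> orbitC q \<alpha> \<Longrightarrow> orbitC q \<beta> \<subseteq> orbitC q \<alpha>"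
proof
  fix \<gamma> assume b: "\<beta> \<in> orbitC q \<alpha>" and g: "\<gamma> \<in> orbitC q \<beta>"
  obtain s where s: "\<beta> = pw \<alpha> (q ^ s)" using b by (auto simp: orbit_eq)
  obtain s' where s': "\<gamma> = pw \<beta> (q ^ s')" using g by (auto simp: orbit_eq)
  have "\<gamma> = pw \<alpha> (q ^ (s + s'))" by (simp add: s s' pw_pw power_add)
  thus "\<gamma> \<in> orbitC q \<alpha>" by (auto simp: orbit_eq)
qed

lemma inv_pw: "inv_tuple (pw \<nu> n) = pw (inv_tuple \<nu>) n"
  by (simp add: inv_tuple_def pw_def power_inverse)

lemma inv_inv: "inv_tuple (inv_tuple \<nu>) = \<nu>"
  by (simp add: inv_tuple_def)

lemma pw_inj:
  fixes \<xi> \<eta> :: "nat \<Rightarrow> 'k"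
  assumes "pw \<xi> (q ^ n) = pw \<eta> (q ^ n)"
  shows "\<xi> = \<eta>"
proof (rule ext)
  fix k
  obtain m where m: "q = p ^ m" using S_card_prime_power by blast
  have "\<xi> k ^ (p ^ (m * n)) = \<eta> k ^ (p ^ (m * n))"
    using fun_cong[OF assms, of k] by (simp add: pw_def m power_mult)
  thus "\<xi> k = \<eta> k" by (rule frob_inj)
qed

lemma period:
  assumes mu: "\<mu> \<in> H"
  shows "\<exists>N\<ge>1. pw \<mu> (q ^ N) = \<mu>"
proof -
  define F where "F = (\<lambda>s. pw \<mu> (q ^ s))"
  have "range F \<subseteq> H" using pw_Hprod[OF mu] by (auto simp: F_def)
  hence "finite (range F)" using finite_H finite_subset by blast
  hence "\<not> inj F" using finite_imageD infinite_UNIV_nat by blast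
  then obtain i j where ij0: "i \<noteq> j" "F i = F j" unfolding inj_def by blast
  obtain i j where ij: "i < j" "F i = F j"
  proof (cases "i < j")
    case True thus ?thesis using that ij0 by blast
  next
    case False thus ?thesis using that[of j i] ij0 by simp
  qed
  have "pw (pw \<mu> (q ^ (j - i))) (q ^ i) = pw \<mu> (q ^ i)"
    using ij by (simp add: F_def pw_pw power_add[symmetric])
  hence "pw \<mu> (q ^ (j - i)) = \<mu>" by (rule pw_inj)
  thus ?thesis using ij by (intro exI[of _ "j - i"]) simp
qed

lemma period_mult:
  assumes "pw \<mu> (q ^ N) = \<mu>"
  shows "pw \<mu> (q ^ (N * c)) = \<mu>"
proof (induction c)
  case (Suc c)
  have "pw \<mu> (q ^ (N * Suc c)) = pw (pw \<mu> (q ^ N)) (q ^ (N * c))"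
    by (simp add: pw_pw power_add[symmetric])
  thus ?case using assms Suc by simp
qed (simp add: pw_def)

lemma orbit_member_back:
  assumes mu: "\<mu> \<in> H" and xi: "\<xi> \<in> orbitC q \<mu>"
  shows "\<mu> \<in> orbitC q \<xi>"
proof -
  obtain s where s: "\<xi> = pw \<mu> (q ^ s)" using xi by (auto simp: orbit_eq)
  obtain N where N: "N \<ge> 1" "pw \<mu> (q ^ N) = \<mu>" using period[OF mu] by blast
  have "\<mu> = pw \<mu> (q ^ (N * s))" using period_mult[OF N(2)] by simp
  also have "N * s = s + (N - 1) * s" using N by (cases N) auto
  also have "pw \<mu> (q ^ (s + (N - 1) * s)) = pw \<xi> (q ^ ((N - 1) * s))"
    by (simp add: s pw_pw power_add)
  finally show ?thesis by (auto simp: orbit_eq)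
qed

lemma orbit_disjoint:
  assumes mu: "\<mu> \<in> H" and ne: "orbitC q \<mu> \<noteq> orbitC q (inv_tuple \<mu>)"
    and xi: "\<xi> \<in> orbitC q \<mu>"
  shows "inv_tuple \<xi> \<notin> orbitC q \<mu>"
proof
  assume ixi: "inv_tuple \<xi> \<in> orbitC q \<mu>"
  obtain s' where s': "inv_tuple \<xi> = pw \<mu> (q ^ s')" using ixi by (auto simp: orbit_eq)
  obtain j where j: "\<mu> = pw \<xi> (q ^ j)" using orbit_member_back[OF mu xi] by (auto simp: orbit_eq)
  have "inv_tuple \<mu> = pw (inv_tuple \<xi>) (q ^ j)" using j inv_pw by metis
  also have "\<dots> = pw \<mu> (q ^ (s' + j))" by (simp add: s' pw_pw power_add)
  finally have imu: "inv_tuple \<mu> \<in> orbitC q \<mu>" by (auto simp: orbit_eq)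
  have "\<mu> \<in> orbitC q (inv_tuple \<mu>)"
  proof -
    obtain l where "inv_tuple \<mu> = pw \<mu> (q ^ l)" using imu by (auto simp: orbit_eq)
    hence "\<mu> = pw (inv_tuple \<mu>) (q ^ l)" using inv_pw inv_inv by metis
    thus ?thesis by (auto simp: orbit_eq)
  qed
  hence "orbitC q \<mu> \<subseteq> orbitC q (inv_tuple \<mu>)" by (rule orbit_sub)
  moreover have "orbitC q (inv_tuple \<mu>) \<subseteq> orbitC q \<mu>" by (rule orbit_sub[OF imu])
  ultimately show False using ne by blast
qed

lemma orbit_H: "\<mu> \<in> H \<Longrightarrow> orbitC q \<mu> \<subseteq> H"
  using pw_Hprod by (auto simp: orbit_eq)

lemma orbit_self: "\<mu> \<in> orbitC q \<mu>"
  by (auto simp: orbit_eq pw_def intro: exI[of _ 0])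

lemma orbit_pw_image:
  assumes mu: "\<mu> \<in> H"
  shows "(\<lambda>\<xi>. pw \<xi> q) ` orbitC q \<mu> = orbitC q \<mu>"
proof (intro equalityI subsetI)
  fix \<eta> assume "\<eta> \<in> (\<lambda>\<xi>. pw \<xi> q) ` orbitC q \<mu>"
  then obtain s where "\<eta> = pw (pw \<mu> (q ^ s)) q" by (auto simp: orbit_eq)
  hence "\<eta> = pw \<mu> (q ^ Suc s)" by (simp add: pw_pw mult.commute)
  thus "\<eta> \<in> orbitC q \<mu>" unfolding orbit_eq by blast
next
  fix \<eta> assume "\<eta> \<in> orbitC q \<mu>"
  then obtain s where s: "\<eta> = pw \<mu> (q ^ s)" by (auto simp: orbit_eq)
  obtain N where N: "N \<ge> 1" "pw \<mu> (q ^ N) = \<mu>" using period[OF mu] by blast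
  obtain N' where N': "N = Suc N'" using N(1) by (cases N) auto
  have "\<eta> = pw (pw \<mu> (q ^ N)) (q ^ s)" using N s by simp
  also have "\<dots> = pw \<mu> (q ^ (s + N') * q)" by (simp add: pw_pw N' power_add ac_simps)
  also have "\<dots> = pw (pw \<mu> (q ^ (s + N'))) q" by (simp add: pw_pw)
  finally show "\<eta> \<in> (\<lambda>\<xi>. pw \<xi> q) ` orbitC q \<mu>" by (auto simp: orbit_eq)
qed

lemma pw_q_inj: "inj_on (\<lambda>\<xi> :: nat \<Rightarrow> 'k. pw \<xi> q) A"
  by (rule inj_onI) (rule pw_inj[of _ 1], simp)

end



context CRE
begin

definition fbar :: "(nat \<Rightarrow> 'k) set \<Rightarrow> (nat \<Rightarrow> nat) \<Rightarrow> 'k" where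
  "fbar C = (\<lambda>g. if g \<in> G then inverse (of_nat (card G)) * (\<Sum>\<xi>\<in>C. chi r (inv_tuple \<xi>) g) else 0)"

lemma cardG_nz: "(of_nat (card G) :: 'k) \<noteq> 0"
  using card_G prod_e_nz by simp

lemma fbar_elemsA: "fbar C \<in> elemsA r e"
  by (simp add: fbar_def elemsA_iff)

lemma fbar_S:
  assumes mu: "\<mu> \<in> H"
  shows "fbar (orbitC q \<mu>) g \<in> S"
proof (cases "g \<in> G")
  case True
  let ?C = "orbitC q \<mu>"
  define x where "x = (\<Sum>\<xi>\<in>?C. chi r (inv_tuple \<xi>) g)"
  obtain m where m: "q = p ^ m" using S_card_prime_power by blast
  have "x ^ q = (\<Sum>\<xi>\<in>?C. chi r (inv_tuple \<xi>) g ^ q)"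
    unfolding x_def m by (rule frob_sum)
  also have "\<dots> = (\<Sum>\<xi>\<in>?C. chi r (inv_tuple (pw \<xi> q)) g)"
    by (simp add: chi_pow inv_pw)
  also have "\<dots> = (\<Sum>\<xi>\<in>(\<lambda>\<xi>. pw \<xi> q) ` ?C. chi r (inv_tuple \<xi>) g)"
    by (rule sum.reindex[OF pw_q_inj, symmetric, unfolded comp_def])
  also have "\<dots> = x" unfolding orbit_pw_image[OF mu] x_def ..
  finally have "x \<in> S" by (rule pow_q_S)
  moreover have "inverse (of_nat (card G)) \<in> S" by (rule S_inverse[OF S_of_nat])
  ultimately show ?thesis using True by (simp add: fbar_def x_def S_mult)
qed (simp add: fbar_def S_zero)

lemma H_div: "\<nu> \<in> H \<Longrightarrow> \<xi> \<in> H \<Longrightarrow> (\<lambda>k. inverse (\<xi> k) * \<nu> k) \<in> H"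
  by (simp add: Hprod_iff power_mult_distrib power_inverse)

lemma four_fbar:
  assumes mu: "\<mu> \<in> H" and nu: "\<nu> \<in> H"
  shows "four r e (fbar (orbitC q \<mu>)) \<nu> = (if \<nu> \<in> orbitC q \<mu> then 1 else 0)"
proof -
  let ?C = "orbitC q \<mu>"
  have CH: "?C \<subseteq> H" by (rule orbit_H[OF mu])
  have finC: "finite ?C" using CH finite_H finite_subset by blast
  have "four r e (fbar ?C) \<nu> = inverse (of_nat (card G)) * (\<Sum>\<xi>\<in>?C. \<Sum>g\<in>G. chi r (\<lambda>k. inverse (\<xi> k) * \<nu> k) g)"
    unfolding four_def fbar_def
    by (subst sum.swap) (simp add: sum_distrib_left sum_distrib_right chi_mult inv_tuple_def mult.assoc)
  also have "\<dots> = inverse (of_nat (card G)) * (\<Sum>\<xi>\<in>?C. if \<xi> = \<nu> then of_nat (card G) else 0)"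
  proof -
    have "(\<Sum>g\<in>G. chi r (\<lambda>k. inverse (\<xi> k) * \<nu> k) g) = (if \<xi> = \<nu> then of_nat (card G) else 0)"
      if xi: "\<xi> \<in> ?C" for \<xi>
    proof -
      have xiH: "\<xi> \<in> H" using xi CH by blast
      have "(\<forall>k<r. inverse (\<xi> k) * \<nu> k = 1) \<longleftrightarrow> \<xi> = \<nu>"
      proof
        assume h: "\<forall>k<r. inverse (\<xi> k) * \<nu> k = 1"
        show "\<xi> = \<nu>"
        proof (rule ext)
          fix k show "\<xi> k = \<nu> k"
          proof (cases "k < r")
            case True
            have "\<xi> k \<noteq> 0" using Hprod_nonzero[OF xiH epos] .
            thus ?thesis using h True by (metis field_class.field_divide_inverse divide_eq_1_iff mult.commute)
          next
            case False thus ?thesis using xiH nu by (simp add: Hprod_iff)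
          qed
        qed
      next
        assume "\<xi> = \<nu>"
        thus "\<forall>k<r. inverse (\<xi> k) * \<nu> k = 1" using Hprod_nonzero[OF nu epos] by simp
      qed
      thus ?thesis using orthG[OF H_div[OF nu xiH]] by simp
    qed
    thus ?thesis by (simp cong: sum.cong)
  qed
  also have "\<dots> = (if \<nu> \<in> ?C then 1 else 0)" using finC cardG_nz by (simp add: sum.delta)
  finally show ?thesis .
qed

lemma exists_nontrivial:
  assumes mu: "\<mu> \<in> H" and ne: "orbitC q \<mu> \<noteq> orbitC q (inv_tuple \<mu>)"
  shows "nontrivial_self_dual_code_exists r e a t"
proof -
  let ?C = "orbitC q \<mu>"
  define fb where "fb = fbar ?C"
  have fbA: "fb \<in> elemsA r e" by (simp add: fb_def fbar_elemsA)
  have four_fb: "\<And>\<nu>. \<nu> \<in> H \<Longrightarrow> four r e fb \<nu> = (if \<nu> \<in> ?C then 1 else 0)"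
    unfolding fb_def by (rule four_fbar[OF mu])
  have fb_idem: "conv r e fb fb = fb"
  proof (rule ext)
    fix g show "conv r e fb fb g = fb g"
    proof (cases "g \<in> G")
      case True
      have "\<forall>\<nu>\<in>H. four r e (\<lambda>g. conv r e fb fb g - fb g) \<nu> = 0"
        using four_fb by (simp add: four_diff four_conv[OF epos])
      hence "conv r e fb fb g - fb g = 0" using four_inj[of "\<lambda>g. conv r e fb fb g - fb g" g] True by blast
      thus ?thesis by simp
    next
      case False thus ?thesis using fbA by (simp add: conv_def elemsA_iff)
    qed
  qed
  have fb_orth: "conv r e fb (star r e fb) = (\<lambda>_. 0)"
  proof (rule ext)
    fix g show "conv r e fb (star r e fb) g = 0"
    proof (cases "g \<in> G")
      case True
      have "\<forall>\<nu>\<in>H. four r e (conv r e fb (star r e fb)) \<nu> = 0"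
      proof
        fix \<nu> assume nu: "\<nu> \<in> H"
        have "four r e (conv r e fb (star r e fb)) \<nu> = four r e fb \<nu> * four r e fb (inv_tuple \<nu>)"
          by (simp add: four_conv[OF epos nu] four_star[OF epos nu])
        also have "\<dots> = 0"
          using four_fb[OF nu] four_fb[OF inv_Hprod[OF nu]] orbit_disjoint[OF mu ne, of \<nu>] by auto
        finally show "four r e (conv r e fb (star r e fb)) \<nu> = 0" .
      qed
      thus ?thesis using four_inj True by blast
    qed (simp add: conv_def)
  qed
  have fb_nz: "fb \<noteq> (\<lambda>_. 0)"
  proof
    assume "fb = (\<lambda>_. 0)"
    hence "four r e fb \<mu> = 0" by (simp add: four_def)
    moreover have "four r e fb \<mu> = 1" using four_fb[OF mu] orbit_self by simp
    ultimately show False by simp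
  qed
  define w where "w = (\<lambda>g. if g \<in> G then (SOME y. \<phi> y = fb g) else 0)"
  have phiw: "(\<lambda>g. \<phi> (w g)) = fb"
  proof (rule ext)
    fix g show "\<phi> (w g) = fb g"
    proof (cases "g \<in> G")
      case True
      have "fb g \<in> S" unfolding fb_def by (rule fbar_S[OF mu])
      hence "\<exists>y. \<phi> y = fb g" by (auto simp: S_def)
      hence "\<phi> (SOME y. \<phi> y = fb g) = fb g" by (rule someI_ex)
      thus ?thesis using True by (simp add: w_def)
    next
      case False thus ?thesis using fbA by (simp add: w_def phi_zero elemsA_iff)
    qed
  qed
  obtain k where k: "k \<ge> 1" "conv r e (powA r e w k) (powA r e w k) = powA r e w k"
    using idem_power by blast
  define f where "f = powA r e w k"
  have fA: "f \<in> elemsA r e" by (simp add: f_def powA_elemsA)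
  have ff: "conv r e f f = f" using k by (simp add: f_def)
  have phif: "(\<lambda>g. \<phi> (f g)) = fb"
  proof -
    have "(\<lambda>g. \<phi> (f g)) = powA r e fb k" unfolding f_def phi_powA phiw ..
    also have "\<dots> = fb" using powA_idem[OF fbA fb_idem, of "k - 1"] k by simp
    finally show ?thesis .
  qed
  define fs where "fs = star r e f"
  have fsA: "fs \<in> elemsA r e" by (simp add: fs_def star_elemsA)
  have fsfs: "conv r e fs fs = fs" unfolding fs_def star_conv[OF epos, symmetric] ff ..
  have sfs: "star r e fs = f" unfolding fs_def by (rule star_star[OF epos fA])
  have ffs: "conv r e f fs = (\<lambda>_. 0)"
  proof -
    let ?v = "conv r e f fs"
    have vA: "?v \<in> elemsA r e" by (rule conv_elemsA)
    have "conv r e ?v ?v = conv r e (conv r e f f) (conv r e fs fs)" by (rule conv_swap4[OF epos])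
    hence vv: "conv r e ?v ?v = ?v" using ff fsfs by simp
    have "(\<lambda>g. \<phi> (?v g)) = conv r e fb (star r e fb)"
      unfolding phi_conv fs_def phi_star phif ..
    hence "\<phi> (?v g) = 0" for g using fb_orth by (metis fun_cong)
    hence "?v g \<in> principal_ideal a" for g using phi_ker by blast
    thus ?thesis by (rule idem_nil[OF vA vv])
  qed
  have fsf: "conv r e fs f = (\<lambda>_. 0)" using ffs conv_comm[OF epos] by metis
  define d0 where "d0 = (delta (\<lambda>_. 0) :: (nat \<Rightarrow> nat) \<Rightarrow> 'r)"
  have d0A: "d0 \<in> elemsA r e" by (simp add: d0_def delta_elemsA[OF zero_exps[OF epos]])
  define u where "u = (\<lambda>i. d0 i - f i - fs i)"
  have uA: "u \<in> elemsA r e" using d0A fA fsA by (simp add: u_def elemsA_iff)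
  have cd0: "conv r e x d0 = x" if "x \<in> elemsA r e" for x
    unfolding d0_def by (rule conv_delta0_right[OF epos that])
  have cd0l: "conv r e d0 x = x" if "x \<in> elemsA r e" for x
    unfolding d0_def by (rule conv_delta0[OF epos that])
  have fu: "conv r e f u = (\<lambda>_. 0)"
  proof -
    have "conv r e f u = (\<lambda>i. conv r e f d0 i - conv r e f f i - conv r e f fs i)"
      unfolding u_def by (simp add: conv_diff_right[OF epos])
    also have "\<dots> = (\<lambda>i. f i - f i - 0)" using ffs by (simp add: cd0[OF fA] ff fun_eq_iff)
    finally show ?thesis by simp
  qed
  have ufs: "conv r e u fs = (\<lambda>_. 0)"
    unfolding u_def by (simp add: conv_diff_left cd0l[OF fsA] fsfs ffs)
  have fsu: "conv r e fs u = (\<lambda>_. 0)" using ufs conv_comm[OF epos] by metis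
  have uu: "conv r e u u = u"
  proof -
    have "conv r e u u = (\<lambda>i. conv r e d0 u i - conv r e f u i - conv r e fs u i)"
      unfolding u_def[of] by (simp add: conv_diff_left u_def)
    thus ?thesis by (simp add: cd0l[OF uA] fu fsu)
  qed
  have su: "star r e u = u"
  proof -
    have "star r e d0 = d0" unfolding d0_def by (rule star_delta0[OF epos])
    moreover have "star r e u = (\<lambda>i. star r e d0 i - star r e f i - star r e fs i)"
      unfolding u_def star_diff ..
    ultimately show ?thesis unfolding u_def sfs fs_def[symmetric] by (simp add: fun_eq_iff)
  qed
  have decomp: "x = (\<lambda>i. conv r e x f i + conv r e x fs i + conv r e x u i)" if "x \<in> elemsA r e" for x
  proof -
    have "conv r e x u = (\<lambda>i. x i - conv r e x f i - conv r e x fs i)"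
      unfolding u_def by (simp add: conv_diff_right[OF epos] cd0[OF that])
    thus ?thesis by simp
  qed
  define K where "K = {x \<in> elemsA r e. conv r e x fs = (\<lambda>_. 0) \<and> (\<forall>g. conv r e x u g \<in> principal_ideal (a ^ h2))}"
  have fK: "f \<in> K" using fA ffs fu by (simp add: K_def)
  have idK: "idealA r e K"
    unfolding idealA_def
  proof (intro conjI ballI)
    show "K \<subseteq> elemsA r e" by (auto simp: K_def)
    show "(\<lambda>_. 0) \<in> K" by (simp add: K_def conv_zero_left elemsA_iff)
  next
    fix x y assume x: "x \<in> K" and y: "y \<in> K"
    show "(\<lambda>i. x i + y i) \<in> K"
      using x y by (auto simp: K_def conv_add_left elemsA_iff intro: pid_add)
  next
    fix x y :: "(nat \<Rightarrow> nat) \<Rightarrow> 'r" assume x: "x \<in> K" and y: "y \<in> elemsA r e"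
    have "conv r e (conv r e y x) fs = (\<lambda>_. 0)"
      using x by (simp add: K_def conv_assoc[OF epos] conv_zero_right[OF epos])
    moreover have "conv r e (conv r e y x) u g \<in> principal_ideal (a ^ h2)" for g
      unfolding conv_assoc[OF epos] by (rule pid_conv_left) (use x in \<open>simp add: K_def\<close>)
    ultimately show "mulA r e y x \<in> K" by (simp add: K_def mulA_conv[OF epos] conv_elemsA)
  qed
  have sdK: "self_dual r e K"
    unfolding self_dual_def
  proof (intro equalityI subsetI)
    fix x assume xK: "x \<in> K"
    have xA: "x \<in> elemsA r e" using xK by (simp add: K_def)
    have "dotA r e x c = 0" if cK: "c \<in> K" for c
    proof -
      have cA: "c \<in> elemsA r e" using cK by (simp add: K_def)
      let ?sc = "star r e c"
      have scA: "?sc \<in> elemsA r e" by (rule star_elemsA)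
      have cfs: "conv r e c fs = (\<lambda>_. 0)" using cK by (simp add: K_def)
      have xfs: "conv r e x fs = (\<lambda>_. 0)" using xK by (simp add: K_def)
      have t1: "conv r e (conv r e x f) ?sc = (\<lambda>_. 0)"
      proof -
        have "conv r e f ?sc = star r e (conv r e fs c)"
          by (simp add: star_conv[OF epos] sfs)
        also have "\<dots> = (\<lambda>_. 0)" using cfs conv_comm[OF epos, of fs c] by (simp add: star_zero)
        finally show ?thesis by (simp add: conv_assoc[OF epos] conv_zero_right[OF epos])
      qed
      have t2: "conv r e (conv r e x u) ?sc m = 0" for m
      proof -
        have A: "conv r e (conv r e x u) (conv r e ?sc f) = (\<lambda>_. 0)"
          by (simp add: conv_swap4[OF epos, of x u ?sc f] conv_comm[OF epos, of u f] fu conv_zero_right[OF epos])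
        have B: "conv r e (conv r e x u) (conv r e ?sc fs) = (\<lambda>_. 0)"
          by (simp add: conv_swap4[OF epos, of x u ?sc fs] ufs conv_zero_right[OF epos])
        have C: "conv r e (conv r e x u) (conv r e ?sc u) m = 0"
        proof -
          have "conv r e ?sc u = star r e (conv r e c u)" by (simp add: star_conv[OF epos] su)
          hence "conv r e ?sc u g \<in> principal_ideal (a ^ h2)" for g
            using cK by (auto simp: K_def intro!: pid_star)
          hence "conv r e (conv r e x u) (conv r e ?sc u) m \<in> principal_ideal (a ^ h2 * a ^ h2)"
            using xK by (intro pid_conv) (auto simp: K_def)
          thus ?thesis using pid_at t_h2 by (simp add: power_add[symmetric])
        qed
        have "conv r e (conv r e x u) ?sc m = conv r e (conv r e x u) (\<lambda>i. conv r e ?sc f i + conv r e ?sc fs i + conv r e ?sc u i) m"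
          by (rule arg_cong[where f="\<lambda>z. conv r e (conv r e x u) z m", OF decomp[OF scA]])
        also have "\<dots> = conv r e (conv r e x u) (conv r e ?sc f) m + conv r e (conv r e x u) (conv r e ?sc fs) m
            + conv r e (conv r e x u) (conv r e ?sc u) m"
          by (simp only: conv_add_right[OF epos])
        also have "\<dots> = 0" using A B C by simp
        finally show ?thesis .
      qed
      have "conv r e x ?sc = (\<lambda>_. 0)"
      proof -
        have "conv r e x ?sc = conv r e (\<lambda>i. conv r e x f i + conv r e x fs i + conv r e x u i) ?sc"
          by (rule arg_cong[where f="\<lambda>z. conv r e z ?sc", OF decomp[OF xA]])
        also have "\<dots> = (\<lambda>_. 0)"
          by (simp add: conv_add_left xfs conv_zero_left t1 t2)
        finally show ?thesis .
      qed
      thus ?thesis using dot_conv0[OF epos cA] by simp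
    qed
    thus "x \<in> dualA r e K" using xA by (simp add: dualA_def)
  next
    fix x assume xd: "x \<in> dualA r e K"
    have xA: "x \<in> elemsA r e" using xd by (simp add: dualA_def)
    have "conv r e x (star r e f) = (\<lambda>_. 0)" by (rule dual_conv[OF idK xd fK])
    hence xfs: "conv r e x fs = (\<lambda>_. 0)" by (simp add: fs_def)
    define v where "v = (\<lambda>i. a ^ h2 * u i)"
    have vK: "v \<in> K"
    proof -
      have "v \<in> elemsA r e" using uA by (simp add: v_def elemsA_iff)
      moreover have "conv r e v fs = (\<lambda>_. 0)" by (simp add: v_def conv_smul_left ufs)
      moreover have "conv r e v u g \<in> principal_ideal (a ^ h2)" for g
        unfolding v_def conv_smul_left uu by (rule pid_mult2[OF pid_self])
      ultimately show ?thesis by (simp add: K_def)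
    qed
    have "conv r e x (star r e v) = (\<lambda>_. 0)" by (rule dual_conv[OF idK xd vK])
    hence xu0: "a ^ h2 * conv r e x u g = 0" for g
      by (simp add: v_def star_smul su conv_smul_right[OF epos] fun_eq_iff)
    have "conv r e x u g \<in> principal_ideal (a ^ h2)" for g
    proof -
      have "conv r e x u g \<in> principal_ideal (a ^ (t - h2))" by (rule ann[OF _ xu0]) simp
      moreover have "t - h2 = h2" using t_h2 by simp
      ultimately show ?thesis by simp
    qed
    thus "x \<in> K" using xA xfs by (simp add: K_def)
  qed
  have neT: "K \<noteq> trivial_code r e a t"
  proof
    assume "K = trivial_code r e a t"
    hence "f \<in> trivial_code r e a t" using fK by simp
    then obtain y where y: "f = (\<lambda>i. a ^ h2 * y i)" by (auto simp: trivial_code_def)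
    have "f = conv r e f f" using ff by simp
    also have "\<dots> = (\<lambda>i. a ^ h2 * (a ^ h2 * conv r e y y i))"
      unfolding y conv_smul_left conv_smul_right[OF epos] ..
    also have "\<dots> = (\<lambda>_. 0)" using at_zero t_h2 by (simp add: mult.assoc[symmetric] power_add[symmetric])
    finally have "f = (\<lambda>_. 0)" .
    hence "fb = (\<lambda>_. 0)" using phif phi_zero by auto
    thus False using fb_nz by simp
  qed
  show ?thesis unfolding nontrivial_self_dual_code_exists_def using idK sdK neT by blast
qed

end


theorem mainTheorem11:
  fixes a :: "'r::comm_ring_1" and t p q r :: nat and e :: "nat \<Rightarrow> nat"
    and \<phi> :: "'r \<Rightarrow> 'k::alg_closed_field"
  assumes chain: "finite_chain_ring TYPE('r)"
    and max: "is_maximal_ideal (principal_ideal a)"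
    and nil: "nilpotency_index a t" and teven: "even t"
    and qdef: "q = residue_card a"
    and pprime: "prime p" and pchar: "of_nat p \<in> principal_ideal a"
    and epos: "\<forall>k<r. 0 < e k" and ecop: "\<forall>k<r. \<not> p dvd e k"
    and clos: "alg_closure_of_residue \<phi> a"
  shows "nontrivial_self_dual_code_exists r e a t \<longleftrightarrow>
         (\<exists>\<mu> \<in> (Hprod r e :: (nat \<Rightarrow> 'k) set). orbitC q \<mu> \<noteq> orbitC q (inv_tuple \<mu>))"
proof -
  have I: "CRE a t \<phi> p q r e"
    unfolding CRE_def CRE_axioms_def CR_def using assms by auto
  interpret CRE a t \<phi> p q r e by (rule I)
  show ?thesis using no_nontrivial exists_nontrivial by blast
qed

end
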